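(* Let $G$ be a connected graph and let $A\subset\mathcal V(G)$ be a set of vertices such that the simple random walk started from any vertex of $G$ a.s. hits $A$ in finite time. For $x\in\mathcal V(G)$ let $X^x$ be the simple random walk started from $x$ and $\tau^x$ the first time $X^x$ hits $A$. Then for $x,y\in\mathcal V(G)\setminus A$, \[ \mathbb d_{\mathrm{TV}}\big(X^x_{\tau^x},X^y_{\tau^y}\big)\leq 1-\mathbb P\big[\text{$X^x$ disconnects $y$ from $A$ before time $\tau^x$}\big], \] where $\mathbb d_{\mathrm{TV}}$ denotes the total variation distance between the laws.
   Context: "$X^x$ disconnects $y$ from $A$ before time $\tau^x$" means that every path in $G$ from $y$ to $A$ passes through a vertex visited by $X^x$ during $[0,\tau^x]$. *)

theory Defs
  imports "HOL-Probability.Probability"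
begin

text \<open>A graph is given by a vertex set V and a symmetric, irreflexive adjacency
relation E with E u v only for u, v in V.\<close>

definition nbrs :: "('a \<Rightarrow> 'a \<Rightarrow> bool) \<Rightarrow> 'a \<Rightarrow> 'a set" where
  "nbrs E v = {w. E v w}"

text \<open>Law of the first n steps (a list of n+1 vertices) of the simple random walk
started at x: each step goes to a uniformly chosen neighbour of the current vertex.\<close>
primrec srw :: "('a \<Rightarrow> 'a \<Rightarrow> bool) \<Rightarrow> 'a \<Rightarrow> nat \<Rightarrow> 'a list pmf" where
  "srw E x 0 = return_pmf [x]"
| "srw E x (Suc n) = srw E x n \<bind>
      (\<lambda>p. map_pmf (\<lambda>v. p @ [v]) (pmf_of_set (nbrs E (last p))))"

text \<open>The trajectory p = (X_0,...,X_n) realises tau = n, i.e. n is the first time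
the walk is in A.\<close>
definition first_hit :: "'a set \<Rightarrow> 'a list \<Rightarrow> bool" where
  "first_hit A p \<longleftrightarrow> p \<noteq> [] \<and> last p \<in> A \<and> (\<forall>i < length p - 1. p ! i \<notin> A)"

text \<open>P[ tau^x < infinity and the trajectory (X_0,...,X_tau) satisfies Q ].\<close>
definition stopped_prob :: "('a \<Rightarrow> 'a \<Rightarrow> bool) \<Rightarrow> 'a set \<Rightarrow> 'a \<Rightarrow> ('a list \<Rightarrow> bool) \<Rightarrow> real" where
  "stopped_prob E A x Q = (\<Sum>n. measure_pmf.prob (srw E x n) {p. first_hit A p \<and> Q p})"

text \<open>Law of X^x_{tau^x}, evaluated on a set B of vertices.\<close>
definition hit_law :: "('a \<Rightarrow> 'a \<Rightarrow> bool) \<Rightarrow> 'a set \<Rightarrow> 'a \<Rightarrow> 'a set \<Rightarrow> real" where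
  "hit_law E A x B = stopped_prob E A x (\<lambda>p. last p \<in> B)"

definition dTV_hit :: "('a \<Rightarrow> 'a \<Rightarrow> bool) \<Rightarrow> 'a set \<Rightarrow> 'a \<Rightarrow> 'a \<Rightarrow> real" where
  "dTV_hit E A x y = (SUP B. \<bar>hit_law E A x B - hit_law E A y B\<bar>)"

definition gpath :: "('a \<Rightarrow> 'a \<Rightarrow> bool) \<Rightarrow> 'a list \<Rightarrow> bool" where
  "gpath E q \<longleftrightarrow> q \<noteq> [] \<and> (\<forall>i < length q - 1. E (q ! i) (q ! Suc i))"

definition disconnects :: "('a \<Rightarrow> 'a \<Rightarrow> bool) \<Rightarrow> 'a set \<Rightarrow> 'a \<Rightarrow> 'a set \<Rightarrow> bool" where
  "disconnects E S y A \<longleftrightarrow>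
     (\<forall>q. gpath E q \<and> hd q = y \<and> last q \<in> A \<longrightarrow> set q \<inter> S \<noteq> {})"

end

theory Submission
  imports Defs
begin

section \<open>ennreal infinite sums\<close>

lemma summable_on_ennreal'[simp]: "(f::_ \<Rightarrow> ennreal) summable_on S"
  by (simp add: nonneg_summable_on_complete)

lemma infsum_cmult_ennreal:
  fixes f :: "'b \<Rightarrow> ennreal"
  shows "infsum (\<lambda>x. c * f x) A = c * infsum f A"
proof -
  have "infsum (\<lambda>x. c * f x) A = (SUP F\<in>{F. finite F \<and> F\<subseteq>A}. sum (\<lambda>x. c * f x) F)"
    by (rule nonneg_infsum_complete) simp
  also have "\<dots> = (SUP F\<in>{F. finite F \<and> F\<subseteq>A}. c * sum f F)"
    by (simp add: sum_distrib_left)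
  also have "\<dots> = c * (SUP F\<in>{F. finite F \<and> F\<subseteq>A}. sum f F)"
    by (simp add: SUP_mult_left_ennreal)
  also have "(SUP F\<in>{F. finite F \<and> F\<subseteq>A}. sum f F) = infsum f A"
    by (rule nonneg_infsum_complete[symmetric]) simp
  finally show ?thesis .
qed

lemma infsum_cmult_ennreal':
  fixes f :: "'b \<Rightarrow> ennreal"
  shows "infsum (\<lambda>x. f x * c) A = infsum f A * c"
  using infsum_cmult_ennreal[of c f A] by (simp add: mult.commute)

lemma infsum_Sigma_finite_ennreal:
  fixes f :: "'b \<times> 'c \<Rightarrow> ennreal"
  assumes "finite F"
  shows "infsum f (Sigma F B) = (\<Sum>x\<in>F. infsum (\<lambda>y. f (x, y)) (B x))"
  using assms
proof (induction F rule: finite_induct)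
  case empty
  then show ?case by simp
next
  case (insert a F)
  have eq: "Sigma (insert a F) B = (Pair a ` B a) \<union> Sigma F B" by auto
  have "infsum f (Sigma (insert a F) B) = infsum f (Pair a ` B a) + infsum f (Sigma F B)"
    unfolding eq by (rule infsum_Un_disjoint) (use insert in auto)
  also have "infsum f (Pair a ` B a) = infsum (\<lambda>y. f (a, y)) (B a)"
    by (subst infsum_reindex) (auto simp: inj_on_def o_def)
  finally show ?case using insert by simp
qed

lemma infsum_Sigma_ennreal:
  fixes f :: "'b \<times> 'c \<Rightarrow> ennreal"
  shows "infsum f (Sigma A B) = infsum (\<lambda>x. infsum (\<lambda>y. f (x, y)) (B x)) A"
proof (rule antisym)
  show "infsum f (Sigma A B) \<le> infsum (\<lambda>x. infsum (\<lambda>y. f (x, y)) (B x)) A"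
  proof (subst nonneg_infsum_complete, simp, rule SUP_least, clarify)
    fix F assume F: "finite F" "F \<subseteq> Sigma A B"
    have "sum f F = infsum f F" using F by simp
    also have "\<dots> \<le> infsum f (Sigma (fst ` F) (\<lambda>x. B x))"
      by (rule infsum_mono_neutral) (use F in force)+
    also have "\<dots> = (\<Sum>x\<in>fst ` F. infsum (\<lambda>y. f (x, y)) (B x))"
      using F by (simp add: infsum_Sigma_finite_ennreal)
    also have "\<dots> = infsum (\<lambda>x. infsum (\<lambda>y. f (x, y)) (B x)) (fst ` F)"
      using F by simp
    also have "\<dots> \<le> infsum (\<lambda>x. infsum (\<lambda>y. f (x, y)) (B x)) A"
      by (rule infsum_mono_neutral) (use F in force)+
    finally show "sum f F \<le> infsum (\<lambda>x. infsum (\<lambda>y. f (x, y)) (B x)) A" .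
  qed
next
  show "infsum (\<lambda>x. infsum (\<lambda>y. f (x, y)) (B x)) A \<le> infsum f (Sigma A B)"
  proof (subst nonneg_infsum_complete, simp, rule SUP_least, clarify)
    fix F assume F: "finite F" "F \<subseteq> A"
    have "(\<Sum>x\<in>F. infsum (\<lambda>y. f (x, y)) (B x)) = infsum f (Sigma F B)"
      using F by (simp add: infsum_Sigma_finite_ennreal)
    also have "\<dots> \<le> infsum f (Sigma A B)"
      by (rule infsum_mono_neutral) (use F in force)+
    finally show "(\<Sum>x\<in>F. infsum (\<lambda>y. f (x, y)) (B x)) \<le> infsum f (Sigma A B)" .
  qed
qed

lemma infsum_partition_ennreal:
  fixes h :: "'b \<Rightarrow> ennreal" and k :: "'b \<Rightarrow> 'c"
  assumes "k ` S \<subseteq> T"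
  shows "infsum h S = infsum (\<lambda>l. infsum h {s\<in>S. k s = l}) T"
proof -
  have "infsum h S = infsum (\<lambda>(l,s). h s) (Sigma T (\<lambda>l. {s\<in>S. k s = l}))"
    by (rule infsum_reindex_bij_witness[of _ snd "\<lambda>s. (k s, s)"]) (use assms in auto)
  also have "\<dots> = infsum (\<lambda>l. infsum h {s\<in>S. k s = l}) T"
    by (subst infsum_Sigma_ennreal) simp
  finally show ?thesis .
qed

lemma infsum_nat_ennreal:
  fixes f :: "nat \<Rightarrow> ennreal"
  shows "suminf f = infsum f UNIV"
  by (rule sums_unique[symmetric], rule has_sum_imp_sums, rule has_sum_infsum) simp

lemma infsum_mono_ennreal:
  fixes f g :: "'b \<Rightarrow> ennreal"
  assumes "\<And>x. x \<in> A \<Longrightarrow> f x \<le> g x"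
  shows "infsum f A \<le> infsum g A"
  by (rule infsum_mono) (use assms in auto)

lemma infsum_mono_set_ennreal:
  fixes f :: "'b \<Rightarrow> ennreal"
  assumes "A \<subseteq> B"
  shows "infsum f A \<le> infsum f B"
  by (rule infsum_mono_neutral) (use assms in auto)

lemma infsum_add_ennreal:
  fixes f g :: "'b \<Rightarrow> ennreal"
  shows "infsum (\<lambda>x. f x + g x) A = infsum f A + infsum g A"
  by (rule infsum_add) auto

lemma infsum_le_finite_ennreal:
  fixes f :: "'b \<Rightarrow> ennreal"
  assumes "\<And>F. finite F \<Longrightarrow> F \<subseteq> A \<Longrightarrow> sum f F \<le> c"
  shows "infsum f A \<le> c"
  by (subst nonneg_infsum_complete) (auto intro!: SUP_least assms)


section \<open>Walk weights\<close>

fun ww :: "('a \<Rightarrow> 'a \<Rightarrow> bool) \<Rightarrow> 'a list \<Rightarrow> ennreal" where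
  "ww E [] = 0"
| "ww E [v] = 1"
| "ww E (v # u # p) = (if E v u then ennreal (1 / real (card (nbrs E v))) else 0) * ww E (u # p)"

lemma ww_glue:
  assumes "q \<noteq> []" "r \<noteq> []" "last q = hd r"
  shows "ww E (q @ tl r) = ww E q * ww E r"
  using assms
proof (induction E q rule: ww.induct)
  case (1 E) then show ?case by simp
next
  case (2 E v)
  then show ?case by (cases r) auto
next
  case (3 E v u p)
  then show ?case by (simp add: mult.assoc)
qed

lemma glue_take_drop:
  assumes "i < length p"
  shows "take (Suc i) p @ tl (drop i p) = p"
  using assms by (metis Cons_nth_drop_Suc append_take_drop_id list.sel(3))

definition HW :: "'a set \<Rightarrow> 'a \<Rightarrow> 'a list set" where
  "HW K z = {p. first_hit K p \<and> hd p = z}"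

lemma glue_sum:
  assumes L: "\<And>q. q \<in> L \<Longrightarrow> q \<noteq> []"
    and R: "\<And>q r. q \<in> L \<Longrightarrow> r \<in> R q \<Longrightarrow> r \<noteq> [] \<and> hd r = last q"
    and inj: "inj_on (\<lambda>(q,r). q @ tl r) (Sigma L R)"
  shows "infsum (ww E) ((\<lambda>(q,r). q @ tl r) ` Sigma L R) = infsum (\<lambda>q. ww E q * infsum (ww E) (R q)) L"
proof -
  have "infsum (ww E) ((\<lambda>(q,r). q @ tl r) ` Sigma L R) = infsum (ww E \<circ> (\<lambda>(q,r). q @ tl r)) (Sigma L R)"
    by (rule infsum_reindex[OF inj])
  also have "\<dots> = infsum (\<lambda>(q,r). ww E q * ww E r) (Sigma L R)"
    by (rule infsum_cong) (auto simp: ww_glue L R)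
  also have "\<dots> = infsum (\<lambda>q. infsum (\<lambda>r. ww E q * ww E r) (R q)) L"
    by (subst infsum_Sigma_ennreal) simp
  also have "\<dots> = infsum (\<lambda>q. ww E q * infsum (ww E) (R q)) L"
    by (simp add: infsum_cmult_ennreal)
  finally show ?thesis .
qed

locale graph =
  fixes V :: "'a set" and E :: "'a \<Rightarrow> 'a \<Rightarrow> bool"
  assumes edges: "\<And>u v. E u v \<Longrightarrow> u \<in> V \<and> v \<in> V"
    and sym: "\<And>u v. E u v \<Longrightarrow> E v u"
    and locfin: "\<And>v. v \<in> V \<Longrightarrow> finite (nbrs E v)"
begin

lemma card_nbrs_pos: "E v u \<Longrightarrow> card (nbrs E v) > 0"
  using edges locfin by (metis card_gt_0_iff empty_iff mem_Collect_eq nbrs_def)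

lemma ww_le1: "ww E p \<le> 1"
proof (induction E p rule: ww.induct)
  case (3 E' v u p)
  have "(if E' v u then ennreal (1 / real (card (nbrs E' v))) else 0) \<le> 1"
    by (auto simp: divide_le_eq_1)
  then show ?case using 3 mult_mono[of "(if E' v u then ennreal (1 / real (card (nbrs E' v))) else 0)" 1 "ww E' (u # p)" 1]
    by simp
qed simp_all

lemma pf_sum:
  assumes "finite F" "\<And>p. p \<in> F \<Longrightarrow> p \<noteq> [] \<and> hd p = x"
    and "\<And>p q. p \<in> F \<Longrightarrow> q \<in> F \<Longrightarrow> take (length p) q = p \<Longrightarrow> p = q"
    and "\<And>p. p \<in> F \<Longrightarrow> length p \<le> n"
  shows "sum (ww E) F \<le> 1"
  using assms
proof (induction n arbitrary: x F)
  case 0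
  then have "F = {}" by fastforce
  then show ?case by simp
next
  case (Suc n)
  show ?case
  proof (cases "[x] \<in> F")
    case True
    have "F = {[x]}"
    proof
      show "F \<subseteq> {[x]}"
      proof
        fix p assume "p \<in> F"
        then have "take (length [x]) p = [x]" using Suc.prems(2)[of p]
          by (cases p) auto
        then show "p \<in> {[x]}" using Suc.prems(3)[OF True \<open>p \<in> F\<close>] by simp
      qed
    qed (use True in auto)
    then show ?thesis by simp
  next
    case False
    have long: "\<And>p. p \<in> F \<Longrightarrow> \<exists>u p'. p = x # u # p'"
    proof -
      fix p assume "p \<in> F"
      with Suc.prems(2)[of p] False obtain p0 where "p = x # p0" by (cases p) auto
      with False \<open>p \<in> F\<close> show "\<exists>u p'. p = x # u # p'" by (cases p0) auto
    qed
    define U where "U = (\<lambda>p. hd (tl p)) ` F"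
    define Fu where "Fu u = {p \<in> F. hd (tl p) = u}" for u
    define c where "c u = (if E x u then ennreal (1 / real (card (nbrs E x))) else 0)" for u
    have finU: "finite U" using Suc.prems(1) by (simp add: U_def)
    have ww_split: "ww E p = c (hd (tl p)) * ww E (tl p)" if "p \<in> F" for p
      using long[OF that] by (auto simp: c_def)
    have "sum (ww E) F = (\<Sum>u\<in>U. sum (ww E) (Fu u))"
      unfolding U_def Fu_def using Suc.prems(1) by (rule sum.image_gen)
    also have "\<dots> = (\<Sum>u\<in>U. c u * sum (ww E) (tl ` Fu u))"
    proof (rule sum.cong[OF refl])
      fix u assume "u \<in> U"
      have inj: "inj_on tl (Fu u)"
      proof (rule inj_onI)
        fix p q assume "p \<in> Fu u" "q \<in> Fu u" "tl p = tl q"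
        then show "p = q" using long[of p] long[of q] by (auto simp: Fu_def)
      qed
      have "sum (ww E) (Fu u) = (\<Sum>p\<in>Fu u. c u * ww E (tl p))"
        by (rule sum.cong) (auto simp: Fu_def ww_split)
      also have "\<dots> = c u * sum (ww E) (tl ` Fu u)"
        by (simp add: sum_distrib_left sum.reindex[OF inj])
      finally show "sum (ww E) (Fu u) = c u * sum (ww E) (tl ` Fu u)" .
    qed
    also have "\<dots> \<le> (\<Sum>u\<in>U. c u * 1)"
    proof (rule sum_mono, rule mult_left_mono)
      fix u assume "u \<in> U"
      show "sum (ww E) (tl ` Fu u) \<le> 1"
      proof (rule Suc.IH[of "tl ` Fu u" u])
        show "finite (tl ` Fu u)" using Suc.prems(1) by (simp add: Fu_def)
        show "\<And>p. p \<in> tl ` Fu u \<Longrightarrow> p \<noteq> [] \<and> hd p = u"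
          using long by (fastforce simp: Fu_def)
        show "\<And>p. p \<in> tl ` Fu u \<Longrightarrow> length p \<le> n"
          using long Suc.prems(4) by (fastforce simp: Fu_def)
        show "\<And>p q. p \<in> tl ` Fu u \<Longrightarrow> q \<in> tl ` Fu u \<Longrightarrow> take (length p) q = p \<Longrightarrow> p = q"
        proof -
          fix p q assume "p \<in> tl ` Fu u" "q \<in> tl ` Fu u" "take (length p) q = p"
          then obtain p1 q1 where p1: "p1 \<in> F" "p = tl p1" and q1: "q1 \<in> F" "q = tl q1"
            by (auto simp: Fu_def)
          obtain a p' where "p1 = x # a # p'" using long[OF p1(1)] by blast
          moreover obtain b q' where "q1 = x # b # q'" using long[OF q1(1)] by blast
          ultimately have "take (length p1) q1 = p1" using \<open>take (length p) q = p\<close> p1 q1 by simp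
          then have "p1 = q1" using Suc.prems(3)[OF p1(1) q1(1)] by simp
          then show "p = q" using p1 q1 by simp
        qed
      qed
    qed simp
    also have "\<dots> = (\<Sum>u\<in>U \<inter> nbrs E x. ennreal (1 / real (card (nbrs E x))))"
      by (rule sum.mono_neutral_cong_right) (auto simp: c_def nbrs_def finU)
    also have "\<dots> \<le> 1"
    proof (cases "nbrs E x = {}")
      case True then show ?thesis by simp
    next
      case False
      then obtain u where "E x u" by (auto simp: nbrs_def)
      then have fin: "finite (nbrs E x)" using edges locfin by blast
      have "(\<Sum>u\<in>U \<inter> nbrs E x. ennreal (1 / real (card (nbrs E x))))
          = ennreal (real (card (U \<inter> nbrs E x)) / real (card (nbrs E x)))"
        by (simp add: ennreal_of_nat_eq_real_of_nat ennreal_mult'[symmetric] divide_inverse)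
      also have "\<dots> \<le> 1"
        using card_mono[OF fin, of "U \<inter> nbrs E x"] False fin
        by (simp add: divide_le_eq_1 card_gt_0_iff)
      finally show ?thesis .
    qed
    finally show ?thesis .
  qed
qed

lemma HW_prefix_free:
  assumes "p \<in> HW K z" "q \<in> HW K z" "take (length p) q = p"
  shows "p = q"
proof (rule ccontr)
  assume "p \<noteq> q"
  have p: "p \<noteq> []" "last p \<in> K" and q: "\<And>i. i < length q - 1 \<Longrightarrow> q ! i \<notin> K"
    using assms(1,2) by (auto simp: HW_def first_hit_def)
  have "length p < length q"
    using assms(3) \<open>p \<noteq> q\<close> by (metis linorder_not_less take_all)
  then have "q ! (length p - 1) = last p"
    using assms(3) p(1) by (metis diff_less last_conv_nth length_greater_0_conv less_one nth_take)
  moreover have "length p - 1 < length q - 1" using \<open>length p < length q\<close> p(1) by (cases p) auto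
  ultimately show False using q[of "length p - 1"] p by simp
qed

lemma HW_le1: "infsum (ww E) (HW K z) \<le> 1"
proof (rule infsum_le_finite_ennreal)
  fix F assume F: "finite F" "F \<subseteq> HW K z"
  show "sum (ww E) F \<le> 1"
  proof (rule pf_sum[of F z "Max (length ` F)"])
    show "\<And>p. p \<in> F \<Longrightarrow> p \<noteq> [] \<and> hd p = z" using F by (auto simp: HW_def first_hit_def)
    show "\<And>p q. p \<in> F \<Longrightarrow> q \<in> F \<Longrightarrow> take (length p) q = p \<Longrightarrow> p = q"
      using F(2) HW_prefix_free by (meson subsetD)
    show "\<And>p. p \<in> F \<Longrightarrow> length p \<le> Max (length ` F)" using F by simp
  qed (use F in simp)
qed

end


section \<open>Splitting paths\<close>

lemma split_first_unique:
  assumes "ys1 @ c # zs1 = ys2 @ c # zs2" "c \<notin> set ys1" "c \<notin> set ys2"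
  shows "ys1 = ys2 \<and> zs1 = zs2"
  using assms
proof (induction ys1 arbitrary: ys2)
  case Nil then show ?case by (cases ys2) auto
next
  case (Cons a ys1) then show ?case by (cases ys2) auto
qed

lemma split_last_unique:
  assumes "ys1 @ c # zs1 = ys2 @ c # zs2" "c \<notin> set zs1" "c \<notin> set zs2"
  shows "ys1 = ys2 \<and> zs1 = zs2"
proof -
  have "rev zs1 @ c # rev ys1 = rev zs2 @ c # rev ys2"
    using assms(1) by (metis rev_append rev.simps(2) append_assoc append_Cons append_Nil)
  then have "rev zs1 = rev zs2 \<and> rev ys1 = rev ys2"
    by (rule split_first_unique) (use assms in auto)
  then show ?thesis by simp
qed

lemma FSsum:
  assumes Q: "\<And>q. q \<in> Q \<Longrightarrow> \<exists>ys. q = ys @ [c] \<and> c \<notin> set ys"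
    and R: "\<And>r. r \<in> R \<Longrightarrow> \<exists>zs. r = c # zs"
    and QR: "\<And>ys zs. ys @ [c] \<in> Q \<Longrightarrow> c # zs \<in> R \<Longrightarrow> ys @ c # zs \<in> P"
    and P: "\<And>ys zs. ys @ c # zs \<in> P \<Longrightarrow> c \<notin> set ys \<Longrightarrow> ys @ [c] \<in> Q \<and> c # zs \<in> R"
    and Pc: "\<And>p. p \<in> P \<Longrightarrow> c \<in> set p"
  shows "infsum (ww E) P = infsum (ww E) Q * infsum (ww E) R"
proof -
  have img: "P = (\<lambda>(q,r). q @ tl r) ` (Q \<times> R)"
  proof
    show "P \<subseteq> (\<lambda>(q,r). q @ tl r) ` (Q \<times> R)"
    proof
      fix p assume "p \<in> P"
      then obtain ys zs where p: "p = ys @ c # zs" "c \<notin> set ys"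
        using Pc split_list_first by metis
      then have "ys @ [c] \<in> Q" "c # zs \<in> R" using P \<open>p \<in> P\<close> by auto
      then show "p \<in> (\<lambda>(q,r). q @ tl r) ` (Q \<times> R)"
        using p by (auto intro!: image_eqI[where x="(ys @ [c], c # zs)"])
    qed
  next
    show "(\<lambda>(q,r). q @ tl r) ` (Q \<times> R) \<subseteq> P"
    proof clarify
      fix q r assume "q \<in> Q" "r \<in> R"
      then obtain ys zs where "q = ys @ [c]" "r = c # zs" using Q R by blast
      then show "q @ tl r \<in> P" using QR \<open>q \<in> Q\<close> \<open>r \<in> R\<close> by simp
    qed
  qed
  have inj: "inj_on (\<lambda>(q,r). q @ tl r) (Q \<times> R)"
  proof (rule inj_onI, clarify)
    fix q1 r1 q2 r2 assume a: "q1 \<in> Q" "r1 \<in> R" "q2 \<in> Q" "r2 \<in> R" "q1 @ tl r1 = q2 @ tl r2"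
    obtain ys1 zs1 where 1: "q1 = ys1 @ [c]" "c \<notin> set ys1" "r1 = c # zs1" using Q R a by blast
    obtain ys2 zs2 where 2: "q2 = ys2 @ [c]" "c \<notin> set ys2" "r2 = c # zs2" using Q R a by blast
    have "ys1 = ys2 \<and> zs1 = zs2" using split_first_unique[of ys1 c zs1 ys2 zs2] a(5) 1 2 by simp
    then show "q1 = q2 \<and> r1 = r2" using 1 2 by simp
  qed
  have "infsum (ww E) P = infsum (\<lambda>q. ww E q * infsum (ww E) R) Q"
    unfolding img by (rule glue_sum[where R="\<lambda>_. R", simplified]) (use Q R inj in force)+
  also have "\<dots> = infsum (ww E) Q * infsum (ww E) R"
    by (rule infsum_cmult_ennreal')
  finally show ?thesis .
qed

lemma LSsum:
  assumes Q: "\<And>q. q \<in> Q \<Longrightarrow> \<exists>ys. q = ys @ [c]"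
    and R: "\<And>r. r \<in> R \<Longrightarrow> \<exists>zs. r = c # zs \<and> c \<notin> set zs"
    and QR: "\<And>ys zs. ys @ [c] \<in> Q \<Longrightarrow> c # zs \<in> R \<Longrightarrow> ys @ c # zs \<in> P"
    and P: "\<And>ys zs. ys @ c # zs \<in> P \<Longrightarrow> c \<notin> set zs \<Longrightarrow> ys @ [c] \<in> Q \<and> c # zs \<in> R"
    and Pc: "\<And>p. p \<in> P \<Longrightarrow> c \<in> set p"
  shows "infsum (ww E) P = infsum (ww E) Q * infsum (ww E) R"
proof -
  have img: "P = (\<lambda>(q,r). q @ tl r) ` (Q \<times> R)"
  proof
    show "P \<subseteq> (\<lambda>(q,r). q @ tl r) ` (Q \<times> R)"
    proof
      fix p assume "p \<in> P"
      then obtain ys zs where p: "p = ys @ c # zs" "c \<notin> set zs"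
        using Pc split_list_last by metis
      then have "ys @ [c] \<in> Q" "c # zs \<in> R" using P \<open>p \<in> P\<close> by auto
      then show "p \<in> (\<lambda>(q,r). q @ tl r) ` (Q \<times> R)"
        using p by (auto intro!: image_eqI[where x="(ys @ [c], c # zs)"])
    qed
  next
    show "(\<lambda>(q,r). q @ tl r) ` (Q \<times> R) \<subseteq> P"
    proof clarify
      fix q r assume "q \<in> Q" "r \<in> R"
      then obtain ys zs where "q = ys @ [c]" "r = c # zs" using Q R by blast
      then show "q @ tl r \<in> P" using QR \<open>q \<in> Q\<close> \<open>r \<in> R\<close> by simp
    qed
  qed
  have inj: "inj_on (\<lambda>(q,r). q @ tl r) (Q \<times> R)"
  proof (rule inj_onI, clarify)
    fix q1 r1 q2 r2 assume a: "q1 \<in> Q" "r1 \<in> R" "q2 \<in> Q" "r2 \<in> R" "q1 @ tl r1 = q2 @ tl r2"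
    obtain ys1 zs1 where 1: "q1 = ys1 @ [c]" "r1 = c # zs1" "c \<notin> set zs1" using Q R a by blast
    obtain ys2 zs2 where 2: "q2 = ys2 @ [c]" "r2 = c # zs2" "c \<notin> set zs2" using Q R a by blast
    have "ys1 = ys2 \<and> zs1 = zs2" using split_last_unique[of ys1 c zs1 ys2 zs2] a(5) 1 2 by simp
    then show "q1 = q2 \<and> r1 = r2" using 1 2 by simp
  qed
  have "infsum (ww E) P = infsum (\<lambda>q. ww E q * infsum (ww E) R) Q"
    unfolding img by (rule glue_sum[where R="\<lambda>_. R", simplified]) (use Q R inj in force)+
  also have "\<dots> = infsum (ww E) Q * infsum (ww E) R"
    by (rule infsum_cmult_ennreal')
  finally show ?thesis .
qed


section \<open>Green functions and the swap identity\<close>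

definition Paths :: "'a set \<Rightarrow> 'a \<Rightarrow> 'a \<Rightarrow> 'a list set" where
  "Paths K a b = {p. p \<noteq> [] \<and> hd p = a \<and> last p = b \<and> set p \<inter> K = {}}"

definition G :: "('a \<Rightarrow> 'a \<Rightarrow> bool) \<Rightarrow> 'a set \<Rightarrow> 'a \<Rightarrow> ennreal" where
  "G E K z = infsum (ww E) (Paths K z z)"

definition R1 where "R1 K u v = {r \<in> Paths K u v. u \<notin> set (tl r)}"
definition R2 where "R2 K u v = {s \<in> Paths K u v. v \<notin> set (butlast s)}"
definition NN where "NN K u v = {s \<in> Paths K u v. u \<notin> set (tl s) \<and> v \<notin> set (butlast s)}"

lemma ex_cons: "r \<noteq> [] \<Longrightarrow> hd r = c \<Longrightarrow> \<exists>zs. r = c # zs"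
  by (cases r) auto
lemma ex_snoc: "q \<noteq> [] \<Longrightarrow> last q = c \<Longrightarrow> \<exists>ys. q = ys @ [c]"
  by (metis append_butlast_last_id)
lemma ex_cons': "r \<noteq> [] \<Longrightarrow> hd r = c \<Longrightarrow> c \<notin> set (tl r) \<Longrightarrow> \<exists>zs. r = c # zs \<and> c \<notin> set zs"
  by (cases r) auto
lemma ex_snoc': "q \<noteq> [] \<Longrightarrow> last q = c \<Longrightarrow> c \<notin> set (butlast q) \<Longrightarrow> \<exists>ys. q = ys @ [c] \<and> c \<notin> set ys"
  by (metis append_butlast_last_id)

lemma hd_app: "hd (ys @ c # zs) = (if ys = [] then c else hd ys)"
  by (cases ys) auto

lemma dec_i: "infsum (ww E) (Paths K u v) = G E K u * infsum (ww E) (R1 K u v)"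
  unfolding G_def
  by (rule LSsum[where c=u]) (auto simp: Paths_def R1_def hd_app split: if_splits intro: ex_cons ex_snoc ex_cons' ex_snoc')

lemma dec_ii:
  assumes "u \<noteq> v"
  shows "infsum (ww E) (R1 K u v) = infsum (ww E) (NN K u v) * G E (insert u K) v"
  unfolding G_def
  by (rule FSsum[where c=v]) (use assms in \<open>auto simp: Paths_def R1_def NN_def hd_app butlast_append split: if_splits intro: ex_cons ex_snoc ex_cons' ex_snoc'\<close>)

lemma dec_iii: "infsum (ww E) (Paths K u v) = infsum (ww E) (R2 K u v) * G E K v"
  unfolding G_def
  by (rule FSsum[where c=v]) (auto simp: Paths_def R2_def hd_app butlast_append split: if_splits intro: ex_cons ex_snoc ex_cons' ex_snoc')

lemma dec_iv:
  assumes "u \<noteq> v"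
  shows "infsum (ww E) (R2 K u v) = G E (insert v K) u * infsum (ww E) (NN K u v)"
  unfolding G_def
  by (rule LSsum[where c=u]) (use assms in \<open>auto simp: Paths_def R2_def NN_def hd_app butlast_append split: if_splits intro: ex_cons ex_snoc ex_cons' ex_snoc'\<close>)

lemma dec_vi: "infsum (ww E) {q \<in> Paths K v v. u \<in> set q} = infsum (ww E) (R2 K v u) * infsum (ww E) (Paths K u v)"
  by (rule FSsum[where c=u]) (auto simp: Paths_def R2_def hd_app butlast_append split: if_splits intro: ex_cons ex_snoc ex_cons' ex_snoc')

lemma dec_v:
  "G E K v = G E (insert u K) v + infsum (ww E) {q \<in> Paths K v v. u \<in> set q}"
proof -
  have "Paths K v v = Paths (insert u K) v v \<union> {q \<in> Paths K v v. u \<in> set q}"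
    by (auto simp: Paths_def)
  moreover have "Paths (insert u K) v v \<inter> {q \<in> Paths K v v. u \<in> set q} = {}"
    by (auto simp: Paths_def)
  ultimately show ?thesis
    unfolding G_def by (metis infsum_Un_disjoint summable_on_ennreal')
qed

context graph
begin

lemma NN_le1:
  assumes "v \<notin> K"
  shows "infsum (ww E) (NN K u v) \<le> 1"
proof -
  have "NN K u v \<subseteq> HW (insert v K) u"
  proof
    fix s assume s: "s \<in> NN K u v"
    have "s ! i \<notin> insert v K" if "i < length s - 1" for i
    proof -
      have "s ! i \<in> set (butlast s)" using that by (simp add: nth_butlast[symmetric])
      moreover have "s ! i \<in> set s" using that by simp
      ultimately show ?thesis using s by (auto simp: NN_def Paths_def)
    qed
    then show "s \<in> HW (insert v K) u" using s by (auto simp: NN_def Paths_def HW_def first_hit_def)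
  qed
  then have "infsum (ww E) (NN K u v) \<le> infsum (ww E) (HW (insert v K) u)"
    by (rule infsum_mono_set_ennreal)
  also have "\<dots> \<le> 1" by (rule HW_le1)
  finally show ?thesis .
qed

lemma G_swap:
  assumes "u \<noteq> v" "u \<notin> K" "v \<notin> K"
  shows "G E K u * G E (insert u K) v = G E K v * G E (insert v K) u"
proof -
  let ?N = "infsum (ww E) (NN K u v)"
  have H1: "infsum (ww E) (Paths K u v) = G E K u * (?N * G E (insert u K) v)"
    using dec_i[of E K u v] dec_ii[OF assms(1), of E K] by simp
  have H2: "infsum (ww E) (Paths K u v) = (G E (insert v K) u * ?N) * G E K v"
    using dec_iii[of E K u v] dec_iv[OF assms(1), of E K] by simp
  show ?thesis
  proof (cases "?N = 0")
    case False
    have fin: "?N \<noteq> top" using NN_le1[OF assms(3), of u] by (auto simp: top_unique)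
    have "(G E K u * G E (insert u K) v) * ?N = (G E K v * G E (insert v K) u) * ?N"
      using H1 H2 by (simp add: ac_simps)
    then show ?thesis using False fin
      by (metis ennreal_mult_cancel_left mult.commute)
  next
    case True
    have Hp0: "infsum (ww E) (Paths K u v) = 0" using H1 True by simp
    have R20: "infsum (ww E) (R2 K u v) = 0" using dec_iv[OF assms(1), of E K] True by simp
    have a: "G E K v = G E (insert u K) v"
      using dec_v[of E K v u] dec_vi[of E K v u] Hp0 by simp
    have b: "G E K u = G E (insert v K) u"
      using dec_v[of E K u v] dec_vi[of E K u v] R20 by simp
    show ?thesis using a b by (simp add: mult.commute)
  qed
qed

end


section \<open>Loop erasure\<close>

definition aft :: "'a \<Rightarrow> 'a list \<Rightarrow> 'a list" where
  "aft z p = rev (takeWhile (\<lambda>v. v \<noteq> z) (rev p))"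

lemma length_aft: "length (aft z p) \<le> length p"
  unfolding aft_def by (metis length_rev length_takeWhile_le)

function le :: "'a list \<Rightarrow> 'a list" where
  "le [] = []"
| "le (z # p) = z # le (aft z p)"
  by pat_completeness auto
termination
  by (relation "Wellfounded.measure length") (auto simp: less_Suc_eq_le length_aft)

lemma aft_notin: "z \<notin> set (aft z p)"
  unfolding aft_def by (metis (mono_tags, lifting) set_rev set_takeWhileD)

lemma aft_subset: "set (aft z p) \<subseteq> set p"
  unfolding aft_def by (metis set_rev set_takeWhileD subsetI)

lemma aft_snoc: "z \<notin> set zs \<Longrightarrow> aft z (ys @ z # zs) = zs"
proof -
  assume "z \<notin> set zs"
  then have "takeWhile (\<lambda>v. v \<noteq> z) (rev zs @ z # rev ys) = rev zs"
    by (subst takeWhile_append2) auto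
  then show ?thesis unfolding aft_def by simp
qed

lemma aft_notin_id: "z \<notin> set zs \<Longrightarrow> aft z zs = zs"
  unfolding aft_def by (induction zs rule: rev_induct) auto

lemma aft_decomp: "z \<in> set p \<Longrightarrow> \<exists>ys. p = ys @ z # aft z p"
proof -
  assume "z \<in> set p"
  then obtain ys zs where "p = ys @ z # zs" "z \<notin> set zs" using split_list_last by metis
  then show ?thesis using aft_snoc by metis
qed

lemma le_glue: "z \<notin> set zs \<Longrightarrow> (ys = [] \<or> hd ys = z) \<Longrightarrow> le (ys @ z # zs) = z # le zs"
proof -
  assume a: "z \<notin> set zs" "ys = [] \<or> hd ys = z"
  show ?thesis
  proof (cases ys)
    case Nil then show ?thesis using a by (simp add: aft_notin_id)
  next
    case (Cons y ys') then show ?thesis using a by (simp add: aft_snoc)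
  qed
qed

lemma le_nil_iff[simp]: "le p = [] \<longleftrightarrow> p = []"
  by (cases p) auto

lemma hd_le: "p \<noteq> [] \<Longrightarrow> hd (le p) = hd p"
  by (cases p) auto

lemma set_le: "set (le p) \<subseteq> set p"
proof (induction p rule: le.induct)
  case (2 z p)
  then show ?case using aft_subset[of z p] by auto
qed simp

lemma distinct_le: "distinct (le p)"
proof (induction p rule: le.induct)
  case (2 z p)
  then show ?case using aft_notin[of z p] set_le[of "aft z p"] by auto
qed simp

lemma last_le: "p \<noteq> [] \<Longrightarrow> last (le p) = last p"
proof (induction p rule: le.induct)
  case 1 then show ?case by simp
next
  case (2 z p)
  show ?case
  proof (cases "aft z p = []")
    case True
    have "p = [] \<or> last p = z"
    proof (cases "z \<in> set p")
      case True
      then obtain ys where "p = ys @ z # aft z p" using aft_decomp by metis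
      then show ?thesis using \<open>aft z p = []\<close> by (metis last_snoc)
    next
      case False
      then show ?thesis using \<open>aft z p = []\<close> aft_notin_id by metis
    qed
    then show ?thesis using True by auto
  next
    case False
    have "last (aft z p) = last p"
    proof (cases "z \<in> set p")
      case True
      then obtain ys where "p = ys @ z # aft z p" using aft_decomp by metis
      then show ?thesis using False by (metis last_ConsR last_appendR list.distinct(1))
    next
      case False
      then show ?thesis using aft_notin_id by metis
    qed
    have "p \<noteq> []" using False by (auto simp: aft_def)
    then show ?thesis using 2 False \<open>last (aft z p) = last p\<close> by (simp add: last_ConsR)
  qed
qed

lemma succ_suffix: "successively R (xs @ ys) \<Longrightarrow> successively R ys"
  by (simp add: successively_append_iff)

lemma succ_aft: "successively R (z # p) \<Longrightarrow> successively R (z # aft z p)"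
proof (cases "z \<in> set p")
  case True
  assume a: "successively R (z # p)"
  obtain ys where "p = ys @ z # aft z p" using True aft_decomp by metis
  then have "z # p = (z # ys) @ (z # aft z p)" by simp
  then show ?thesis using a succ_suffix by metis
next
  case False
  assume a: "successively R (z # p)"
  then show ?thesis using False by (simp add: aft_notin_id)
qed

lemma successively_le: "successively R p \<Longrightarrow> successively R (le p)"
proof (induction p rule: le.induct)
  case 1 then show ?case by simp
next
  case (2 z p)
  have a: "successively R (z # aft z p)" using succ_aft[OF 2(2)] .
  then have s: "successively R (aft z p)" by (cases "aft z p") auto
  have ih: "successively R (le (aft z p))" using 2(1) s by simp
  show ?case
  proof (cases "aft z p")
    case Nil then show ?thesis by simp
  next
    case (Cons b bs)
    then have "R z b" using a by simp
    moreover have "hd (le (aft z p)) = b" using Cons hd_le[of "aft z p"] by simp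
    ultimately show ?thesis using ih Cons by (simp add: successively_Cons)
  qed
qed

lemma first_hit_iff: "first_hit K p \<longleftrightarrow> p \<noteq> [] \<and> last p \<in> K \<and> set (butlast p) \<inter> K = {}"
proof -
  have "(\<forall>i < length p - 1. p ! i \<notin> K) \<longleftrightarrow> set (butlast p) \<inter> K = {}"
  proof
    assume a: "\<forall>i < length p - 1. p ! i \<notin> K"
    show "set (butlast p) \<inter> K = {}"
    proof (rule ccontr)
      assume "set (butlast p) \<inter> K \<noteq> {}"
      then obtain i where "i < length (butlast p)" "butlast p ! i \<in> K" by (auto simp: in_set_conv_nth)
      then show False using a nth_butlast[of i p] by simp
    qed
  next
    assume a: "set (butlast p) \<inter> K = {}"
    show "\<forall>i < length p - 1. p ! i \<notin> K"
    proof (intro allI impI)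
      fix i assume i: "i < length p - 1"
      then have "butlast p ! i \<in> set (butlast p)" by simp
      then show "p ! i \<notin> K" using a i nth_butlast[of i p] by auto
    qed
  qed
  then show ?thesis unfolding first_hit_def by blast
qed

lemma HW_iff: "p \<in> HW K z \<longleftrightarrow> p \<noteq> [] \<and> hd p = z \<and> last p \<in> K \<and> set (butlast p) \<inter> K = {}"
  unfolding HW_def first_hit_iff by blast

lemma set_butlast_last: "p \<noteq> [] \<Longrightarrow> set p = insert (last p) (set (butlast p))"
  by (metis append_butlast_last_id set_append Un_insert_right empty_set list.simps(15) sup_bot.right_neutral)

lemma le_HW: "p \<in> HW K z \<Longrightarrow> le p \<in> HW K z"
proof -
  assume p: "p \<in> HW K z"
  then have ne: "p \<noteq> []" by (simp add: HW_iff)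
  have "set (butlast (le p)) \<inter> K = {}"
  proof -
    have "x \<notin> K" if x: "x \<in> set (butlast (le p))" for x
    proof -
      have "le p \<noteq> []" using ne by simp
      then have "x \<noteq> last (le p)" using x distinct_le[of p]
        by (metis append_butlast_last_id distinct_append distinct.simps(2) not_distinct_conv_prefix)
      then have "x \<noteq> last p" using last_le[OF ne] by simp
      moreover have "x \<in> set p" using x set_le[of p] by (meson in_set_butlastD subsetD)
      ultimately have "x \<in> set (butlast p)" using set_butlast_last[OF ne] by auto
      then show ?thesis using p by (auto simp: HW_iff)
    qed
    then show ?thesis by blast
  qed
  then show ?thesis using p ne last_le[OF ne] hd_le[OF ne] by (auto simp: HW_iff)
qed

fun Phi :: "('a \<Rightarrow> 'a \<Rightarrow> bool) \<Rightarrow> 'a set \<Rightarrow> 'a list \<Rightarrow> ennreal" where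
  "Phi E K [] = 1"
| "Phi E K (v # vs) = G E K v * Phi E (insert v K) vs"

lemma Phi_append: "Phi E K (xs @ ys) = Phi E K xs * Phi E (K \<union> set xs) ys"
  by (induction xs arbitrary: K) (simp_all add: mult.assoc)

context graph
begin

lemma Phi_move:
  assumes "distinct (ys1 @ v # ys2)" "set (ys1 @ v # ys2) \<inter> K = {}"
  shows "Phi E K (ys1 @ v # ys2) = Phi E K (v # ys1 @ ys2)"
  using assms
proof (induction ys1 arbitrary: K)
  case Nil then show ?case by simp
next
  case (Cons w ys1)
  have ih: "Phi E (insert w K) (ys1 @ v # ys2) = Phi E (insert w K) (v # ys1 @ ys2)"
    by (rule Cons.IH) (use Cons.prems in auto)
  have sw: "G E K w * G E (insert w K) v = G E K v * G E (insert v K) w"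
    by (rule G_swap) (use Cons.prems in auto)
  have ins: "insert v (insert w K) = insert w (insert v K)" by auto
  have "Phi E K ((w # ys1) @ v # ys2) = G E K w * Phi E (insert w K) (ys1 @ v # ys2)" by simp
  also have "\<dots> = (G E K w * G E (insert w K) v) * Phi E (insert v (insert w K)) (ys1 @ ys2)"
    by (simp add: ih mult.assoc)
  also have "\<dots> = (G E K v * G E (insert v K) w) * Phi E (insert w (insert v K)) (ys1 @ ys2)"
    by (simp add: sw ins)
  also have "\<dots> = Phi E K (v # (w # ys1) @ ys2)"
    by (simp add: mult.assoc)
  finally show ?case .
qed

lemma Phi_perm:
  assumes "distinct xs" "distinct ys" "set xs = set ys" "set xs \<inter> K = {}"
  shows "Phi E K xs = Phi E K ys"
  using assms
proof (induction xs arbitrary: K ys)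
  case Nil then show ?case by simp
next
  case (Cons v xs)
  then have "v \<in> set ys" by auto
  then obtain ys1 ys2 where ys: "ys = ys1 @ v # ys2" by (metis split_list)
  have "Phi E K ys = Phi E K (v # ys1 @ ys2)"
    unfolding ys by (rule Phi_move) (use Cons.prems ys in auto)
  also have "\<dots> = G E K v * Phi E (insert v K) (ys1 @ ys2)" by simp
  also have "Phi E (insert v K) (ys1 @ ys2) = Phi E (insert v K) xs"
    by (rule Cons.IH[symmetric]) (use Cons.prems ys in auto)
  finally show ?case by simp
qed

end


section \<open>Lawler's formula\<close>

lemma ww_Cons2: "ww E (z # w # r) = (if E z w then ennreal (1 / real (card (nbrs E z))) else 0) * ww E (w # r)"
  by simp

lemma HW_single:
  assumes "z \<in> K"
  shows "{p \<in> HW K z. le p = [z]} = {[z]}"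
proof
  show "{p \<in> HW K z. le p = [z]} \<subseteq> {[z]}"
  proof clarify
    fix p assume p: "p \<in> HW K z" "le p = [z]"
    show "p = [z]"
    proof (rule ccontr)
      assume "p \<noteq> [z]"
      have ne: "p \<noteq> []" and hd: "hd p = z" and bl: "set (butlast p) \<inter> K = {}"
        using p by (auto simp: HW_iff)
      obtain b bs where pb: "p = b # bs" using ne by (cases p) auto
      have "bs \<noteq> []" using pb hd \<open>p \<noteq> [z]\<close> by auto
      then have "z \<in> set (butlast p)" using pb hd by simp
      then show False using bl assms by blast
    qed
  qed
next
  show "{[z]} \<subseteq> {p \<in> HW K z. le p = [z]}" using assms by (auto simp: HW_iff aft_def)
qed

lemma LEF:
  assumes "l \<in> HW K z" "distinct l"
  shows "infsum (ww E) {p \<in> HW K z. le p = l} = ww E l * Phi E K (butlast l)"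
  using assms
proof (induction l arbitrary: z K)
  case Nil
  then show ?case by (simp add: HW_iff)
next
  case (Cons z' l')
  have z': "z' = z" using Cons.prems by (simp add: HW_iff)
  show ?case
  proof (cases l')
    case Nil
    then have "z \<in> K" using Cons.prems z' by (simp add: HW_iff)
    then show ?thesis using Nil z' HW_single[of z K] by simp
  next
    case (Cons w l'')
    note l' = this
    let ?l = "z # w # l''"
    have lHW: "?l \<in> HW K z" using Cons.prems z' l' by simp
    have zK: "z \<notin> K" using lHW by (auto simp: HW_iff)
    have lastK: "last l'' \<in> K \<or> (l'' = [] \<and> w \<in> K)" using lHW by (auto simp: HW_iff split: if_splits)
    have lastl: "last (w # l'') \<in> K" using lHW by (simp add: HW_iff)
    define T where "T = {r \<in> HW (insert z K) w. le r = w # l''}"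
    have wHW: "w # l'' \<in> HW (insert z K) w"
    proof -
      have "set (butlast (w # l'')) \<subseteq> set (butlast ?l)" by (cases l'') auto
      moreover have "z \<notin> set (w # l'')" using Cons.prems z' l' by simp
      ultimately show ?thesis using lHW lastl by (auto simp: HW_iff dest: in_set_butlastD)
    qed
    have IH: "infsum (ww E) T = ww E (w # l'') * Phi E (insert z K) (butlast (w # l''))"
      unfolding T_def using Cons.IH[where z=w and K="insert z K"] wHW Cons.prems l' by simp
    have Tprop: "r \<noteq> [] \<and> hd r = w \<and> z \<notin> set r \<and> last r \<in> K" if "r \<in> T" for r
    proof -
      have r: "r \<in> HW (insert z K) w" "le r = w # l''" using that by (auto simp: T_def)
      have ne: "r \<noteq> []" using r by (auto simp: HW_iff)
      have lr: "last r = last (w # l'')" using last_le[OF ne] r by simp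
      then have "last r \<in> K" using lastl by simp
      moreover have "z \<notin> set (butlast r)" using r by (auto simp: HW_iff)
      ultimately have "z \<notin> set r" using set_butlast_last[OF ne] zK by auto
      then show ?thesis using ne r \<open>last r \<in> K\<close> by (auto simp: HW_iff)
    qed
    have S: "infsum (ww E) {p \<in> HW K z. le p = ?l} = G E K z * infsum (ww E) (Cons z ` T)"
      unfolding G_def
    proof (rule LSsum[where c=z])
      show "\<And>q. q \<in> Paths K z z \<Longrightarrow> \<exists>ys. q = ys @ [z]"
        by (auto simp: Paths_def intro: ex_snoc)
      show "\<And>r. r \<in> Cons z ` T \<Longrightarrow> \<exists>zs. r = z # zs \<and> z \<notin> set zs"
        using Tprop by blast
      show "ys @ z # zs \<in> {p \<in> HW K z. le p = ?l}"
        if q: "ys @ [z] \<in> Paths K z z" and r: "z # zs \<in> Cons z ` T" for ys zs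
      proof -
        have zs: "zs \<in> T" using r by auto
        note tp = Tprop[OF zs]
        have hy: "ys = [] \<or> hd ys = z" using q by (cases ys) (auto simp: Paths_def)
        have "le (ys @ z # zs) = z # le zs" by (rule le_glue) (use tp hy in auto)
        then have le: "le (ys @ z # zs) = ?l" using zs by (simp add: T_def)
        have "set (butlast (ys @ z # zs)) = set ys \<union> {z} \<union> set (butlast zs)"
          using tp by (simp add: butlast_append)
        moreover have "set ys \<inter> K = {}" using q by (auto simp: Paths_def)
        moreover have "set (butlast zs) \<inter> K = {}" using zs by (auto simp: T_def HW_iff)
        ultimately have "set (butlast (ys @ z # zs)) \<inter> K = {}" using zK by auto
        moreover have "hd (ys @ z # zs) = z" using hy by (cases ys) auto
        moreover have "last (ys @ z # zs) \<in> K" using tp by simp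
        ultimately show ?thesis using le by (auto simp: HW_iff)
      qed
      show "ys @ [z] \<in> Paths K z z \<and> z # zs \<in> Cons z ` T"
        if p: "ys @ z # zs \<in> {p \<in> HW K z. le p = ?l}" and zn: "z \<notin> set zs" for ys zs
      proof -
        have pH: "ys @ z # zs \<in> HW K z" and ple: "le (ys @ z # zs) = ?l" using p by auto
        have hy: "ys = [] \<or> hd ys = z" using pH by (cases ys) (auto simp: HW_iff)
        have "le (ys @ z # zs) = z # le zs" by (rule le_glue) (use zn hy in auto)
        then have lezs: "le zs = w # l''" using ple by simp
        then have zsne: "zs \<noteq> []" by auto
        have hzs: "hd zs = w" using hd_le[OF zsne] lezs by simp
        have blp: "set (butlast (ys @ z # zs)) \<inter> K = {}" using pH by (simp add: HW_iff)
        have bl: "butlast (ys @ z # zs) = ys @ z # butlast zs" using zsne by (simp add: butlast_append)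
        have "zs \<in> HW (insert z K) w"
          using blp bl zn zsne hzs pH by (auto simp: HW_iff dest: in_set_butlastD)
        then have "zs \<in> T" using lezs by (simp add: T_def)
        moreover have "ys @ [z] \<in> Paths K z z"
          using blp bl hy by (cases ys) (auto simp: Paths_def)
        ultimately show ?thesis by blast
      qed
      show "\<And>p. p \<in> {p \<in> HW K z. le p = ?l} \<Longrightarrow> z \<in> set p"
        by (auto simp: HW_iff)
    qed
    have "infsum (ww E) (Cons z ` T) = infsum (\<lambda>r. ww E (z # r)) T"
      by (subst infsum_reindex) (auto simp: o_def)
    also have "\<dots> = infsum (\<lambda>r. (if E z w then ennreal (1 / real (card (nbrs E z))) else 0) * ww E r) T"
    proof (rule infsum_cong)
      fix r assume "r \<in> T"
      then obtain r' where "r = w # r'" using Tprop by (metis ex_cons)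
      then show "ww E (z # r) = (if E z w then ennreal (1 / real (card (nbrs E z))) else 0) * ww E r" by simp
    qed
    also have "\<dots> = (if E z w then ennreal (1 / real (card (nbrs E z))) else 0) * infsum (ww E) T"
      by (rule infsum_cmult_ennreal)
    finally have "infsum (ww E) {p \<in> HW K z. le p = ?l}
        = G E K z * ((if E z w then ennreal (1 / real (card (nbrs E z))) else 0) * (ww E (w # l'') * Phi E (insert z K) (butlast (w # l''))))"
      using S IH by simp
    then show ?thesis using z' l' by (simp add: ac_simps)
  qed
qed

definition DHW where "DHW K z = {l \<in> HW K z. distinct l}"

lemma LEsum:
  "infsum (\<lambda>p. ww E p * f (le p)) (HW K z) = infsum (\<lambda>l. ww E l * Phi E K (butlast l) * f l) (DHW K z)"
proof -
  have "infsum (\<lambda>p. ww E p * f (le p)) (HW K z)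
      = infsum (\<lambda>l. infsum (\<lambda>p. ww E p * f (le p)) {p \<in> HW K z. le p = l}) (DHW K z)"
    by (rule infsum_partition_ennreal) (auto simp: DHW_def le_HW distinct_le)
  also have "\<dots> = infsum (\<lambda>l. infsum (\<lambda>p. ww E p * f l) {p \<in> HW K z. le p = l}) (DHW K z)"
    by (rule infsum_cong, rule infsum_cong) auto
  also have "\<dots> = infsum (\<lambda>l. infsum (ww E) {p \<in> HW K z. le p = l} * f l) (DHW K z)"
    by (simp add: infsum_cmult_ennreal')
  also have "\<dots> = infsum (\<lambda>l. ww E l * Phi E K (butlast l) * f l) (DHW K z)"
    by (rule infsum_cong) (simp add: DHW_def LEF)
  finally show ?thesis .
qed


section \<open>Bridge between srw and walk weights\<close>

context graph
begin

lemma ww_nz: "ww E p \<noteq> 0 \<Longrightarrow> p \<noteq> [] \<and> successively E p"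
proof (induction E p rule: ww.induct)
  case (3 E' v u p)
  then show ?case by (auto split: if_splits)
qed simp_all

lemma ww_snoc:
  assumes "q \<noteq> []"
  shows "ww E (q @ [v]) = ww E q * (if E (last q) v then ennreal (1 / real (card (nbrs E (last q)))) else 0)"
proof -
  have "ww E (q @ tl [last q, v]) = ww E q * ww E [last q, v]"
    by (rule ww_glue) (use assms in auto)
  then show ?thesis by simp
qed

lemma nbrs_last:
  assumes "x \<in> V" "nbrs E x \<noteq> {}" "p \<noteq> []" "hd p = x" "successively E p"
  shows "finite (nbrs E (last p)) \<and> nbrs E (last p) \<noteq> {}"
proof (cases "butlast p = []")
  case True
  then have "p = [x]" using assms by (metis append_butlast_last_id append_Nil hd_Cons_tl last.simps list.sel(1))
  then show ?thesis using assms locfin by simp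
next
  case False
  have "p = butlast p @ [last p]" using assms by simp
  then have "E (last (butlast p)) (last p)"
    using assms(5) False by (metis successively_append_iff list.distinct(1) list.sel(1))
  then have "E (last p) (last (butlast p))" by (rule sym)
  then show ?thesis using edges locfin by (auto simp: nbrs_def)
qed

lemma srw_set:
  assumes "x \<in> V" "nbrs E x \<noteq> {}"
  shows "set_pmf (srw E x n) \<subseteq> {p. length p = Suc n \<and> hd p = x \<and> successively E p} \<and> finite (set_pmf (srw E x n))"
proof (induction n)
  case 0 then show ?case by simp
next
  case (Suc n)
  have N: "finite (nbrs E (last q)) \<and> nbrs E (last q) \<noteq> {}" if "q \<in> set_pmf (srw E x n)" for q
  proof -
    have "q \<noteq> [] \<and> hd q = x \<and> successively E q" using Suc that by auto
    then show ?thesis using nbrs_last[OF assms, of q] by blast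
  qed
  have eq: "set_pmf (srw E x (Suc n)) = (\<Union>q\<in>set_pmf (srw E x n). (\<lambda>v. q @ [v]) ` nbrs E (last q))"
    using N by simp
  show ?case
  proof
    show "set_pmf (srw E x (Suc n)) \<subseteq> {p. length p = Suc (Suc n) \<and> hd p = x \<and> successively E p}"
    proof
      fix p assume "p \<in> set_pmf (srw E x (Suc n))"
      then obtain q v where q: "q \<in> set_pmf (srw E x n)" "v \<in> nbrs E (last q)" "p = q @ [v]"
        unfolding eq by blast
      then have qq: "length q = Suc n" "hd q = x" "successively E q" using Suc by auto
      then have "q \<noteq> []" by auto
      then have "successively E (q @ [v])" using qq q(2) by (auto simp: successively_append_iff nbrs_def)
      then show "p \<in> {p. length p = Suc (Suc n) \<and> hd p = x \<and> successively E p}"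
        using q qq \<open>q \<noteq> []\<close> by auto
    qed
    show "finite (set_pmf (srw E x (Suc n)))" unfolding eq using Suc N by auto
  qed
qed

lemma pmf_snoc_map:
  "pmf (map_pmf (\<lambda>v. q @ [v]) M) p = (if p \<noteq> [] \<and> butlast p = q then pmf M (last p) else 0)"
proof (cases "p \<noteq> [] \<and> butlast p = q")
  case True
  then have "p = q @ [last p]" by (metis append_butlast_last_id)
  then have "pmf (map_pmf (\<lambda>v. q @ [v]) M) p = pmf M (last p)"
    by (metis (no_types, lifting) inj_def pmf_map_inj' same_append_eq list.inject)
  then show ?thesis using True by simp
next
  case False
  then have "p \<notin> (\<lambda>v. q @ [v]) ` set_pmf M" by auto
  then show ?thesis using False by (subst pmf_map_outside) auto
qed

lemma srw_pmf:
  assumes "x \<in> V" "nbrs E x \<noteq> {}"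
  shows "ennreal (pmf (srw E x n) p) = (if length p = Suc n \<and> hd p = x then ww E p else 0)"
proof (induction n arbitrary: p)
  case 0
  then show ?case
    by (cases p) (auto simp: indicator_def)
next
  case (Suc n)
  define c where "c q = pmf (pmf_of_set (nbrs E (last q))) (last p)" for q
  have "ennreal (pmf (srw E x (Suc n)) p)
      = (\<integral>\<^sup>+q. ennreal (pmf (map_pmf (\<lambda>v. q @ [v]) (pmf_of_set (nbrs E (last q)))) p) \<partial>measure_pmf (srw E x n))"
    by (simp add: ennreal_pmf_bind)
  also have "\<dots> = (\<integral>\<^sup>+q. ennreal (if p \<noteq> [] then c (butlast p) else 0) * indicator {butlast p} q \<partial>measure_pmf (srw E x n))"
    by (rule nn_integral_cong) (auto simp: pmf_snoc_map c_def indicator_def)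
  also have "\<dots> = ennreal (if p \<noteq> [] then c (butlast p) else 0) * ennreal (pmf (srw E x n) (butlast p))"
    by (simp add: nn_integral_cmult_indicator emeasure_pmf_single)
  also have "\<dots> = (if length p = Suc (Suc n) \<and> hd p = x then ww E p else 0)"
  proof (cases "length p = Suc (Suc n) \<and> hd p = x")
    case True
    have lb: "length (butlast p) = Suc n" using True by simp
    then have ne2: "butlast p \<noteq> []" by (metis length_0_conv nat.simps(3))
    then have ne: "p \<noteq> []" "butlast p \<noteq> []" by auto
    have hb: "hd (butlast p) = x" using True ne by (cases p) auto
    have p: "p = butlast p @ [last p]" using ne by simp
    have wp: "ww E p = ww E (butlast p) * (if E (last (butlast p)) (last p) then ennreal (1 / real (card (nbrs E (last (butlast p))))) else 0)"
      by (subst p, rule ww_snoc) (use ne in auto)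
    show ?thesis
    proof (cases "ww E (butlast p) = 0")
      case True
      then show ?thesis using Suc[of "butlast p"] hb lb wp \<open>length p = Suc (Suc n) \<and> hd p = x\<close> by simp
    next
      case False
      then have sb: "successively E (butlast p)" using ww_nz by blast
      have N: "finite (nbrs E (last (butlast p))) \<and> nbrs E (last (butlast p)) \<noteq> {}"
        by (rule nbrs_last[OF assms]) (use ne hb sb in auto)
      have "c (butlast p) = (if E (last (butlast p)) (last p) then 1 / real (card (nbrs E (last (butlast p)))) else 0)"
        using N by (simp add: c_def nbrs_def indicator_def)
      then show ?thesis using Suc[of "butlast p"] hb lb wp True ne
        by (simp add: mult.commute)
    qed
  next
    case False
    have "ennreal (pmf (srw E x n) (butlast p)) = 0 \<or> p = []"
    proof (cases "p = []")
      case False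
      then have "\<not> (length (butlast p) = Suc n \<and> hd (butlast p) = x)"
        using \<open>\<not> (length p = Suc (Suc n) \<and> hd p = x)\<close>
        by (cases p) (auto split: if_splits)
      then show ?thesis using Suc[of "butlast p"] by auto
    qed simp
    then show ?thesis using False by auto
  qed
  finally show ?case .
qed

lemma prob_ww:
  assumes "x \<in> V" "nbrs E x \<noteq> {}"
  shows "ennreal (measure_pmf.prob (srw E x n) S) = infsum (ww E) {p \<in> S. length p = Suc n \<and> hd p = x}"
proof -
  let ?M = "srw E x n"
  have fin: "finite (set_pmf ?M)" and sub: "set_pmf ?M \<subseteq> {p. length p = Suc n \<and> hd p = x \<and> successively E p}"
    using srw_set[OF assms, of n] by auto
  have "ennreal (measure_pmf.prob ?M S) = emeasure (measure_pmf ?M) S"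
    by (simp add: measure_pmf.emeasure_eq_measure)
  also have "\<dots> = emeasure (measure_pmf ?M) (S \<inter> set_pmf ?M)"
    by (simp add: emeasure_Int_set_pmf)
  also have "\<dots> = (\<Sum>p\<in>S \<inter> set_pmf ?M. ennreal (pmf ?M p))"
    using fin by (simp add: emeasure_measure_pmf_finite)
  also have "\<dots> = infsum (\<lambda>p. ennreal (pmf ?M p)) (S \<inter> set_pmf ?M)"
    using fin by simp
  also have "\<dots> = infsum (ww E) {p \<in> S. length p = Suc n \<and> hd p = x}"
  proof (rule infsum_cong_neutral)
    fix p assume p: "p \<in> {p \<in> S. length p = Suc n \<and> hd p = x} - S \<inter> set_pmf ?M"
    then have "pmf ?M p = 0" by (simp add: set_pmf_eq)
    then show "ww E p = 0" using srw_pmf[OF assms, of n p] p by simp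
  next
    fix p assume "p \<in> S \<inter> set_pmf ?M - {p \<in> S. length p = Suc n \<and> hd p = x}"
    then show "ennreal (pmf ?M p) = 0" using sub by auto
  next
    fix p assume p: "p \<in> S \<inter> set_pmf ?M \<inter> {p \<in> S. length p = Suc n \<and> hd p = x}"
    then show "ennreal (pmf ?M p) = ww E p" using srw_pmf[OF assms, of n p] by simp
  qed
  finally show ?thesis .
qed

lemma stopped_ww:
  assumes "x \<in> V" "nbrs E x \<noteq> {}"
  shows "ennreal (stopped_prob E A x Q) = infsum (ww E) {p \<in> HW A x. Q p}"
proof -
  define f where "f n = measure_pmf.prob (srw E x n) {p. first_hit A p \<and> Q p}" for n
  have fn: "ennreal (f n) = infsum (ww E) {p \<in> {p \<in> HW A x. Q p}. length p - 1 = n}" for n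
  proof -
    have "{p \<in> {p. first_hit A p \<and> Q p}. length p = Suc n \<and> hd p = x} = {p \<in> {p \<in> HW A x. Q p}. length p - 1 = n}"
      by (auto simp: HW_def first_hit_def)
    then show ?thesis unfolding f_def using prob_ww[OF assms, of n] by simp
  qed
  have "(\<Sum>n. ennreal (f n)) = infsum (\<lambda>n. ennreal (f n)) UNIV"
    by (rule infsum_nat_ennreal)
  also have "\<dots> = infsum (\<lambda>n. infsum (ww E) {p \<in> {p \<in> HW A x. Q p}. length p - 1 = n}) UNIV"
    using fn by simp
  also have "\<dots> = infsum (ww E) {p \<in> HW A x. Q p}"
    by (rule infsum_partition_ennreal[symmetric]) simp
  finally have S: "(\<Sum>n. ennreal (f n)) = infsum (ww E) {p \<in> HW A x. Q p}" .
  have "infsum (ww E) {p \<in> HW A x. Q p} \<le> infsum (ww E) (HW A x)"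
    by (rule infsum_mono_set_ennreal) auto
  also have "\<dots> \<le> 1" by (rule HW_le1)
  finally have "(\<Sum>n. ennreal (f n)) \<noteq> top" using S by (auto simp: top_unique)
  have feq: "f = (\<lambda>n. measure_pmf.prob (srw E x n) {p. first_hit A p \<and> Q p})"
    by (rule ext) (simp add: f_def)
  have summ: "summable f" using \<open>(\<Sum>n. ennreal (f n)) \<noteq> top\<close> by (rule summable_suminf_not_top[rotated]) (simp add: f_def)
  have "ennreal (stopped_prob E A x Q) = ennreal (\<Sum>n. f n)"
    by (simp add: stopped_prob_def f_def)
  also have "\<dots> = (\<Sum>n. ennreal (f n))"
    by (rule suminf_ennreal2[symmetric]) (use summ feq in auto)
  finally show ?thesis using S by simp
qed

lemma stopped_nonneg:
  assumes "x \<in> V" "nbrs E x \<noteq> {}"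
  shows "stopped_prob E A x Q \<ge> 0"
proof -
  define f where "f n = measure_pmf.prob (srw E x n) {p. first_hit A p \<and> Q p}" for n
  have "(\<Sum>n. ennreal (f n)) = infsum (\<lambda>n. ennreal (f n)) UNIV"
    by (rule infsum_nat_ennreal)
  also have "\<dots> = infsum (\<lambda>n. infsum (ww E) {p \<in> {p \<in> HW A x. Q p}. length p - 1 = n}) UNIV"
  proof (rule infsum_cong)
    fix n
    have "{p \<in> {p. first_hit A p \<and> Q p}. length p = Suc n \<and> hd p = x} = {p \<in> {p \<in> HW A x. Q p}. length p - 1 = n}"
      by (auto simp: HW_def first_hit_def)
    then show "ennreal (f n) = infsum (ww E) {p \<in> {p \<in> HW A x. Q p}. length p - 1 = n}"
      unfolding f_def using prob_ww[OF assms, of n] by simp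
  qed
  also have "\<dots> = infsum (ww E) {p \<in> HW A x. Q p}"
    by (rule infsum_partition_ennreal[symmetric]) simp
  also have "\<dots> \<le> infsum (ww E) (HW A x)"
    by (rule infsum_mono_set_ennreal) auto
  also have "\<dots> \<le> 1" by (rule HW_le1)
  finally have "(\<Sum>n. ennreal (f n)) \<noteq> top" by (auto simp: top_unique)
  then have summ: "summable f" by (rule summable_suminf_not_top[rotated]) (simp add: f_def)
  then have "0 \<le> (\<Sum>n. f n)" by (rule suminf_nonneg) (simp add: f_def)
  then show ?thesis by (simp add: stopped_prob_def f_def)
qed

end


section \<open>Hitting decompositions\<close>

lemma split_hit:
  assumes "A \<subseteq> K" "p \<in> HW A z"
  shows "\<exists>q r. p = q @ tl r \<and> q \<in> HW K z \<and> r \<in> HW A (last q)"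
proof -
  have p: "p \<noteq> []" "hd p = z" "last p \<in> A" "set (butlast p) \<inter> A = {}" using assms(2) by (auto simp: HW_iff)
  have "\<exists>c\<in>set p. c \<in> K" using p assms(1) last_in_set by blast
  then obtain ys c zs where s: "p = ys @ c # zs" "c \<in> K" "\<forall>y\<in>set ys. y \<notin> K"
    using split_list_first_prop[of p "\<lambda>c. c \<in> K"] by blast
  have q: "ys @ [c] \<in> HW K z"
    using s p by (cases ys) (auto simp: HW_iff)
  have bl: "butlast p = ys @ butlast (c # zs)" using s by (simp add: butlast_append)
  have "c # zs \<in> HW A c"
  proof -
    have "last (c # zs) = last p" using s by simp
    moreover have "set (butlast (c # zs)) \<inter> A = {}" using p(4) bl by auto
    ultimately show ?thesis using p by (auto simp: HW_iff)
  qed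
  then show ?thesis using q s by (intro exI[of _ "ys @ [c]"] exI[of _ "c # zs"]) auto
qed

lemma glue_hit:
  assumes "A \<subseteq> K" "q \<in> HW K z" "r \<in> HW A (last q)"
  shows "q @ tl r \<in> HW A z"
proof -
  have q: "q \<noteq> []" "hd q = z" "last q \<in> K" "set (butlast q) \<inter> K = {}" using assms(2) by (auto simp: HW_iff)
  have r: "r \<noteq> []" "hd r = last q" "last r \<in> A" "set (butlast r) \<inter> A = {}" using assms(3) by (auto simp: HW_iff)
  obtain zs where rz: "r = last q # zs" using r by (cases r) auto
  show ?thesis
  proof (cases "zs = []")
    case True
    then show ?thesis using q r rz assms(1) by (auto simp: HW_iff)
  next
    case False
    have "butlast (q @ zs) = butlast q @ [last q] @ butlast zs" using False q
      by (simp add: butlast_append)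
    moreover have "set (butlast r) = insert (last q) (set (butlast zs))" using rz False by simp
    ultimately have "set (butlast (q @ zs)) \<inter> A = {}" using q r assms(1) by auto
    then show ?thesis using q r rz False by (auto simp: HW_iff)
  qed
qed

locale rwA = graph V E for V :: "'a set" and E +
  fixes A :: "'a set"
  assumes AV: "A \<subseteq> V"
    and hitsW: "\<And>v. v \<in> V \<Longrightarrow> infsum (ww E) (HW A v) = 1"
begin

lemma inj_hit:
  "inj_on (\<lambda>(q,r). q @ tl r) (Sigma (HW K z) (\<lambda>q. HW A (last q)))"
proof (rule inj_onI, clarify)
  fix q1 r1 q2 r2
  assume a: "q1 \<in> HW K z" "r1 \<in> HW A (last q1)" "q2 \<in> HW K z" "r2 \<in> HW A (last q2)"
    "q1 @ tl r1 = q2 @ tl r2"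
  have "q1 = q2"
  proof (cases "length q1 \<le> length q2")
    case True
    then have "take (length q1) q2 = q1" using a(5) by (metis append_eq_append_conv_if take_all)
    then show ?thesis using HW_prefix_free[OF a(1) a(3)] by simp
  next
    case False
    then have "take (length q2) q1 = q2" using a(5) by (metis append_eq_append_conv_if nle_le take_all)
    then show ?thesis using HW_prefix_free[OF a(3) a(1)] by simp
  qed
  moreover then have "r1 = r2" using a
    by (auto simp: HW_iff) (metis list.collapse)
  ultimately show "q1 = q2 \<and> r1 = r2" by simp
qed

lemma last_V:
  assumes "q \<noteq> []" "hd q \<in> V" "ww E q \<noteq> 0"
  shows "last q \<in> V"
proof (cases "butlast q = []")
  case True
  then have "q = [hd q]" using assms(1) by (metis append_butlast_last_id append_Nil hd_Cons_tl last.simps list.sel(1))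
  then show ?thesis using assms by (metis last.simps)
next
  case False
  have s: "successively E q" using ww_nz[OF assms(3)] by simp
  have "q = butlast q @ [last q]" using assms by simp
  then have "E (last (butlast q)) (last q)"
    using s False by (metis successively_append_iff list.distinct(1) list.sel(1))
  then show ?thesis using edges by blast
qed

lemma glue_image:
  assumes "A \<subseteq> K"
  shows "HW A z = (\<lambda>(q,r). q @ tl r) ` Sigma (HW K z) (\<lambda>q. HW A (last q))"
  using split_hit[OF assms] glue_hit[OF assms] by fastforce

lemma TM:
  assumes "A \<subseteq> K" "z \<in> V"
  shows "infsum (ww E) (HW K z) = 1"
proof -
  have "1 = infsum (ww E) (HW A z)" using hitsW[OF assms(2)] by simp
  also have "\<dots> = infsum (\<lambda>q. ww E q * infsum (ww E) (HW A (last q))) (HW K z)"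
    unfolding glue_image[OF assms(1), of z]
    by (rule glue_sum) (auto simp: HW_iff inj_hit)
  also have "\<dots> = infsum (ww E) (HW K z)"
  proof (rule infsum_cong)
    fix q assume q: "q \<in> HW K z"
    show "ww E q * infsum (ww E) (HW A (last q)) = ww E q"
    proof (cases "ww E q = 0")
      case False
      then have "last q \<in> V" using last_V q assms(2) by (auto simp: HW_iff)
      then show ?thesis using hitsW by simp
    qed simp
  qed
  finally show ?thesis by simp
qed

lemma meet_le:
  "infsum (ww E) {g \<in> HW A x. set g \<inter> M \<noteq> {}} \<le> infsum (ww E) {q \<in> HW (A \<union> M) x. last q \<in> M}"
proof -
  let ?L = "{q \<in> HW (A \<union> M) x. last q \<in> M}"
  have sub: "{g \<in> HW A x. set g \<inter> M \<noteq> {}} \<subseteq> (\<lambda>(q,r). q @ tl r) ` Sigma ?L (\<lambda>q. HW A (last q))"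
  proof
    fix g assume g: "g \<in> {g \<in> HW A x. set g \<inter> M \<noteq> {}}"
    then obtain q r where qr: "g = q @ tl r" "q \<in> HW (A \<union> M) x" "r \<in> HW A (last q)"
      using split_hit[of A "A \<union> M" g x] by auto
    have "last q \<in> M"
    proof (rule ccontr)
      assume nM: "last q \<notin> M"
      then have lA: "last q \<in> A" using qr(2) by (auto simp: HW_iff)
      have qne: "q \<noteq> []" using qr(2) by (auto simp: HW_iff)
      have "tl r = []"
      proof (rule ccontr)
        assume "tl r \<noteq> []"
        then have "butlast g = butlast q @ [last q] @ butlast (tl r)" using qr(1) qne
          by (simp add: butlast_append)
        then have "last q \<in> set (butlast g)" by simp
        then show False using g lA by (auto simp: HW_iff)
      qed
      then have "g = q" using qr by simp
      then have "set g = insert (last q) (set (butlast q))" using qne set_butlast_last by metis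
      then show False using g nM qr(2) by (auto simp: HW_iff)
    qed
    then show "g \<in> (\<lambda>(q,r). q @ tl r) ` Sigma ?L (\<lambda>q. HW A (last q))"
      using qr by (auto intro!: image_eqI[where x="(q, r)"])
  qed
  have inj: "inj_on (\<lambda>(q,r). q @ tl r) (Sigma ?L (\<lambda>q. HW A (last q)))"
    by (rule inj_on_subset[OF inj_hit]) auto
  have "infsum (ww E) {g \<in> HW A x. set g \<inter> M \<noteq> {}} \<le> infsum (ww E) ((\<lambda>(q,r). q @ tl r) ` Sigma ?L (\<lambda>q. HW A (last q)))"
    by (rule infsum_mono_set_ennreal[OF sub])
  also have "\<dots> = infsum (\<lambda>q. ww E q * infsum (ww E) (HW A (last q))) ?L"
    by (rule glue_sum[OF _ _ inj]) (auto simp: HW_iff)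
  also have "\<dots> \<le> infsum (\<lambda>q. ww E q * 1) ?L"
    by (rule infsum_mono_ennreal) (metis HW_le1 mult_left_mono zero_le)
  finally show ?thesis by simp
qed

end


section \<open>Two-branch trees\<close>

definition TR :: "'a set \<Rightarrow> 'a \<Rightarrow> 'a \<Rightarrow> ('a list \<times> 'a list) set" where
  "TR A a b = Sigma (DHW A a) (\<lambda>l. DHW (A \<union> set l) b)"

definition PT :: "('a \<Rightarrow> 'a \<Rightarrow> bool) \<Rightarrow> 'a set \<Rightarrow> 'a list \<times> 'a list \<Rightarrow> ennreal" where
  "PT E A t = ww E (fst t) * Phi E A (butlast (fst t)) * (ww E (snd t) * Phi E (A \<union> set (fst t)) (butlast (snd t)))"

definition swapT :: "'a list \<times> 'a list \<Rightarrow> 'a list \<times> 'a list" where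
  "swapT t = (let l1 = fst t; l2 = snd t; z = last l2 in
     if z \<in> set l1 then (butlast l2 @ dropWhile (\<lambda>v. v \<noteq> z) l1, takeWhile (\<lambda>v. v \<noteq> z) l1 @ [z])
     else (l2, l1))"

definition JJ :: "'a list \<times> 'a list \<Rightarrow> bool" where
  "JJ t \<longleftrightarrow> last (snd t) \<in> set (fst t)"

lemma takeWhile_split: "z \<notin> set ys \<Longrightarrow> takeWhile (\<lambda>v. v \<noteq> z) (ys @ z # zs) = ys"
  by (induction ys) auto

lemma dropWhile_split: "z \<notin> set ys \<Longrightarrow> dropWhile (\<lambda>v. v \<noteq> z) (ys @ z # zs) = z # zs"
  by (induction ys) auto

lemma A_set_butlast: "l \<noteq> [] \<Longrightarrow> last l \<in> A \<Longrightarrow> A \<union> set l = A \<union> set (butlast l)"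
proof -
  assume a: "l \<noteq> []" "last l \<in> A"
  have "set l = insert (last l) (set (butlast l))" using set_butlast_last[OF a(1)] .
  then show ?thesis using a(2) by auto
qed

lemma DHW_iff: "l \<in> DHW K z \<longleftrightarrow> l \<noteq> [] \<and> hd l = z \<and> last l \<in> K \<and> set (butlast l) \<inter> K = {} \<and> distinct l"
  by (auto simp: DHW_def HW_iff)

context rwA
begin

lemma tree_swap:
  assumes "t \<in> TR A a b"
  shows "swapT t \<in> TR A b a \<and> swapT (swapT t) = t \<and> PT E A (swapT t) = PT E A t
    \<and> (JJ (swapT t) = JJ t) \<and> (JJ t \<longrightarrow> last (fst (swapT t)) = last (fst t))"
proof -
  obtain l1 l2 where t: "t = (l1, l2)" by (cases t)
  have h1: "l1 \<noteq> []" "hd l1 = a" "last l1 \<in> A" "set (butlast l1) \<inter> A = {}" "distinct l1"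
    using assms t by (auto simp: TR_def DHW_iff)
  have h2: "l2 \<noteq> []" "hd l2 = b" "last l2 \<in> A \<union> set l1" "set (butlast l2) \<inter> (A \<union> set l1) = {}" "distinct l2"
    using assms t by (auto simp: TR_def DHW_iff)
  define z where "z = last l2"
  define bs where "bs = butlast l2"
  have l2: "l2 = bs @ [z]" using h2 by (simp add: z_def bs_def)
  have bsd: "distinct bs" "z \<notin> set bs" using h2(5) l2 by auto
  have Phi1: "PT E A t = ww E l1 * ww E l2 * Phi E A (butlast l1 @ bs)"
    using t h1 by (simp add: PT_def Phi_append A_set_butlast[of l1 A] bs_def ac_simps)
  show ?thesis
  proof (cases "z \<in> set l1")
    case True
    obtain ys zs where l1: "l1 = ys @ z # zs" using True by (metis split_list)
    have d1: "z \<notin> set ys" "z \<notin> set zs" "distinct ys" "distinct zs" "set ys \<inter> set zs = {}"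
      using h1(5) l1 by auto
    have bsl1: "set bs \<inter> set l1 = {}" "set bs \<inter> A = {}" using h2(4) bs_def by auto
    have sw: "swapT t = (bs @ z # zs, ys @ [z])"
      using t True d1 by (simp add: swapT_def Let_def z_def[symmetric] bs_def[symmetric] l1 takeWhile_split dropWhile_split)
    define m2 where "m2 = bs @ z # zs"
    define m1 where "m1 = ys @ [z]"
    have bl1: "butlast l1 = ys @ butlast (z # zs)" using l1 by (simp add: butlast_append)
    have blm2: "butlast m2 = bs @ butlast (z # zs)" by (simp add: m2_def butlast_append)
    have lastm2: "last m2 = last l1" by (simp add: m2_def l1)
    have hdm2: "hd m2 = b" using h2(2) l2 by (cases bs) (auto simp: m2_def)
    have hdm1: "hd m1 = a" using h1(2) l1 by (cases ys) (auto simp: m1_def)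
    have sbz: "set (butlast (z # zs)) \<subseteq> set (butlast l1)" using bl1 by auto
    have ysA: "set ys \<inter> A = {}" using h1(4) bl1 by auto
    have m2D: "m2 \<in> DHW A b"
      using hdm2 lastm2 h1 blm2 sbz bsl1 bsd d1 l1 by (auto simp: DHW_iff m2_def)
    have m1D: "m1 \<in> DHW (A \<union> set m2) a"
      using hdm1 ysA d1 bsl1 l1 by (auto simp: DHW_iff m1_def m2_def)
    have mem: "swapT t \<in> TR A b a" using sw m2D m1D by (simp add: TR_def m1_def m2_def)
    have sw2: "swapT (swapT t) = t"
      using sw t d1 bsd l1 l2 by (simp add: swapT_def Let_def takeWhile_split dropWhile_split)
    have J1: "JJ t" using True t by (simp add: JJ_def z_def)
    have J2: "JJ (swapT t)" using sw by (simp add: JJ_def)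
    have lst: "last (fst (swapT t)) = last (fst t)" using sw t lastm2 by (simp add: m2_def)
    have ww1: "ww E l1 = ww E (ys @ [z]) * ww E (z # zs)"
      using ww_glue[of "ys @ [z]" "z # zs" E] l1 by simp
    have ww2: "ww E m2 = ww E l2 * ww E (z # zs)"
      using ww_glue[of "bs @ [z]" "z # zs" E] l2 by (simp add: m2_def)
    have sw': "swapT t = (m2, m1)" using sw by (simp add: m1_def m2_def)
    have Am2: "A \<union> set m2 = A \<union> set (butlast m2)"
      by (rule A_set_butlast) (use lastm2 h1(3) in \<open>auto simp: m2_def\<close>)
    have blm1: "butlast m1 = ys" by (simp add: m1_def)
    have "PT E A (swapT t) = ww E m2 * ww E m1 * Phi E A (butlast m2 @ ys)"
      unfolding sw' PT_def by (simp add: Phi_append Am2 blm1 ac_simps)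
    also have "Phi E A (butlast m2 @ ys) = Phi E A (butlast l1 @ bs)"
    proof (rule Phi_perm)
      show "distinct (butlast m2 @ ys)" using blm2 bsd d1 bsl1 l1 distinct_butlast[of "z # zs"]
        by (auto dest: in_set_butlastD)
      show "distinct (butlast l1 @ bs)" using bl1 bsd d1 bsl1 l1 distinct_butlast[of "z # zs"]
        by (auto dest: in_set_butlastD)
      show "set (butlast m2 @ ys) = set (butlast l1 @ bs)" using blm2 bl1 by auto
      show "set (butlast m2 @ ys) \<inter> A = {}" using blm2 bsl1 ysA sbz h1(4) by auto
    qed
    finally have "PT E A (swapT t) = PT E A t"
      using Phi1 ww1 ww2 by (simp add: m1_def ac_simps)
    then show ?thesis using mem sw2 J1 J2 lst by simp
  next
    case False
    have zA: "z \<in> A" using h2(3) False by (simp add: z_def)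
    have sw: "swapT t = (l2, l1)" using t False by (simp add: swapT_def Let_def z_def)
    have l1n: "last l1 \<notin> set l2"
    proof
      assume "last l1 \<in> set l2"
      then have "last l1 \<in> set bs \<or> last l1 = z" using l2 by auto
      moreover have "last l1 \<in> set l1" using h1(1) by simp
      ultimately show False using h2(4) bs_def False by (auto simp: z_def)
    qed
    have bsl1: "set bs \<inter> set l1 = {}" using h2(4) bs_def by auto
    have mem: "swapT t \<in> TR A b a"
    proof -
      have "l2 \<in> DHW A b" using h2 zA by (auto simp: DHW_iff z_def)
      moreover have "set (butlast l1) \<inter> set l2 = {}" using bsl1 l2 False by (auto dest: in_set_butlastD)
      then have "l1 \<in> DHW (A \<union> set l2) a" using h1 by (auto simp: DHW_iff)
      ultimately show ?thesis using sw by (simp add: TR_def)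
    qed
    have sw2: "swapT (swapT t) = t" using sw t l1n by (simp add: swapT_def Let_def)
    have J: "JJ (swapT t) = JJ t" using sw t l1n False by (simp add: JJ_def z_def)
    have "PT E A (swapT t) = ww E l2 * ww E l1 * Phi E A (bs @ butlast l1)"
    proof -
      have "A \<union> set l2 = A \<union> set (butlast l2)" using A_set_butlast[OF h2(1), of A] zA by (simp add: z_def)
      then show ?thesis using sw by (simp add: PT_def Phi_append bs_def ac_simps)
    qed
    also have "Phi E A (bs @ butlast l1) = Phi E A (butlast l1 @ bs)"
    proof (rule Phi_perm)
      show "distinct (bs @ butlast l1)" using bsd h1(5) bsl1 distinct_butlast[of l1]
        by (auto dest: in_set_butlastD)
      show "distinct (butlast l1 @ bs)" using bsd h1(5) bsl1 distinct_butlast[of l1]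
        by (auto dest: in_set_butlastD)
      show "set (bs @ butlast l1) = set (butlast l1 @ bs)" by auto
      show "set (bs @ butlast l1) \<inter> A = {}" using h2(4) h1(4) bs_def by auto
    qed
    finally have "PT E A (swapT t) = PT E A t" using Phi1 by (simp add: ac_simps)
    moreover have "\<not> JJ t" using t False by (simp add: JJ_def z_def)
    ultimately show ?thesis using mem sw2 J by simp
  qed
qed

end


lemma gpath_iff: "gpath E q \<longleftrightarrow> q \<noteq> [] \<and> successively E q"
  unfolding gpath_def successively_conv_nth by auto

lemma infsum_restrict_ennreal:
  fixes f :: "'b \<Rightarrow> ennreal"
  shows "infsum f {x \<in> S. P x} = infsum (\<lambda>x. f x * (if P x then 1 else 0)) S"
  by (rule infsum_cong_neutral) auto

context rwA
begin

lemma inner_one: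
  assumes "b \<in> V" "A \<subseteq> K"
  shows "infsum (\<lambda>l. ww E l * Phi E K (butlast l)) (DHW K b) = 1"
proof -
  have "infsum (\<lambda>l. ww E l * Phi E K (butlast l) * 1) (DHW K b) = infsum (\<lambda>p. ww E p * 1) (HW K b)"
    by (rule LEsum[symmetric])
  then show ?thesis using TM[OF assms(2,1)] by simp
qed

lemma M1:
  assumes "a \<in> V" "b \<in> V"
  shows "infsum (\<lambda>t. PT E A t * f (last (fst t))) (TR A a b) = infsum (\<lambda>g. ww E g * f (last g)) (HW A a)"
proof -
  have "infsum (\<lambda>t. PT E A t * f (last (fst t))) (TR A a b)
      = infsum (\<lambda>l1. infsum (\<lambda>l2. (ww E l1 * Phi E A (butlast l1) * f (last l1)) *
            (ww E l2 * Phi E (A \<union> set l1) (butlast l2))) (DHW (A \<union> set l1) b)) (DHW A a)"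
    unfolding TR_def by (subst infsum_Sigma_ennreal) (simp add: PT_def ac_simps)
  also have "\<dots> = infsum (\<lambda>l1. (ww E l1 * Phi E A (butlast l1) * f (last l1)) *
            infsum (\<lambda>l2. ww E l2 * Phi E (A \<union> set l1) (butlast l2)) (DHW (A \<union> set l1) b)) (DHW A a)"
    by (simp add: infsum_cmult_ennreal)
  also have "\<dots> = infsum (\<lambda>l1. ww E l1 * Phi E A (butlast l1) * f (last l1)) (DHW A a)"
    by (rule infsum_cong) (simp add: inner_one[OF assms(2)])
  also have "\<dots> = infsum (\<lambda>g. ww E g * f (last (le g))) (HW A a)"
    by (rule LEsum[symmetric])
  also have "\<dots> = infsum (\<lambda>g. ww E g * f (last g)) (HW A a)"
    by (rule infsum_cong) (simp add: HW_iff last_le)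
  finally show ?thesis .
qed

lemma PD_le:
  assumes "x \<in> V" "y \<in> V"
  shows "infsum (ww E) {g \<in> HW A x. disconnects E (set g) y A}
    \<le> infsum (\<lambda>s. PT E A s * (if JJ s then 1 else 0)) (TR A y x)"
proof -
  let ?D = "{g \<in> HW A x. disconnects E (set g) y A}"
  define gg where "gg m = infsum (\<lambda>m1. ww E m1 * Phi E (A \<union> set m) (butlast m1) * (if last m1 \<in> set m then 1 else 0)) (DHW (A \<union> set m) x)" for m
  have "infsum (ww E) ?D = infsum (ww E) (HW A y) * infsum (ww E) ?D"
    using hitsW[OF assms(2)] by simp
  also have "\<dots> = infsum (\<lambda>h. ww E h * infsum (ww E) ?D) (HW A y)"
    by (rule infsum_cmult_ennreal'[symmetric])
  also have "\<dots> \<le> infsum (\<lambda>h. ww E h * gg (le h)) (HW A y)"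
  proof (rule infsum_mono_ennreal)
    fix h assume h: "h \<in> HW A y"
    show "ww E h * infsum (ww E) ?D \<le> ww E h * gg (le h)"
    proof (cases "ww E h = 0")
      case False
      have hne: "h \<noteq> []" using h by (simp add: HW_iff)
      have sh: "successively E h" using ww_nz False by blast
      let ?M = "set (le h)"
      have gp: "gpath E (le h)" using successively_le[OF sh] hne by (simp add: gpath_iff)
      have hd: "hd (le h) = y" using hne h by (simp add: hd_le HW_iff)
      have la: "last (le h) \<in> A" using hne h by (simp add: last_le HW_iff)
      have "?D \<subseteq> {g \<in> HW A x. set g \<inter> ?M \<noteq> {}}"
        using gp hd la by (auto simp: disconnects_def)
      then have "infsum (ww E) ?D \<le> infsum (ww E) {g \<in> HW A x. set g \<inter> ?M \<noteq> {}}"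
        by (rule infsum_mono_set_ennreal)
      also have "\<dots> \<le> infsum (ww E) {q \<in> HW (A \<union> ?M) x. last q \<in> ?M}"
        by (rule meet_le)
      also have "\<dots> = infsum (\<lambda>q. ww E q * (if last (le q) \<in> ?M then 1 else 0)) (HW (A \<union> ?M) x)"
        by (subst infsum_restrict_ennreal) (rule infsum_cong, simp add: HW_iff last_le)
      also have "\<dots> = gg (le h)"
        unfolding gg_def by (rule LEsum)
      finally show ?thesis by (rule mult_left_mono) simp
    qed simp
  qed
  also have "\<dots> = infsum (\<lambda>m. ww E m * Phi E A (butlast m) * gg m) (DHW A y)"
    by (rule LEsum)
  also have "\<dots> = infsum (\<lambda>m. infsum (\<lambda>m1. PT E A (m, m1) * (if JJ (m, m1) then 1 else 0)) (DHW (A \<union> set m) x)) (DHW A y)"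
    unfolding gg_def
    by (rule infsum_cong) (simp add: infsum_cmult_ennreal[symmetric] PT_def JJ_def ac_simps)
  also have "\<dots> = infsum (\<lambda>s. PT E A s * (if JJ s then 1 else 0)) (TR A y x)"
    unfolding TR_def by (rule infsum_Sigma_ennreal[symmetric])
  finally show ?thesis .
qed

end


context rwA
begin

lemma reindex_swap:
  "infsum h (TR A b a) = infsum (\<lambda>t. h (swapT t)) (TR A a b)"
  by (rule infsum_reindex_bij_witness[of "TR A a b" swapT swapT "TR A b a" h "\<lambda>t. h (swapT t)", symmetric])
     (use tree_swap in blast)+

lemma hit_tree:
  assumes "a \<in> V" "b \<in> V" "nbrs E a \<noteq> {}"
  shows "ennreal (hit_law E A a B) = infsum (\<lambda>t. PT E A t * (if last (fst t) \<in> B then 1 else 0)) (TR A a b)"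
proof -
  have "ennreal (hit_law E A a B) = infsum (ww E) {p \<in> HW A a. last p \<in> B}"
    unfolding hit_law_def by (rule stopped_ww[OF assms(1,3)])
  also have "\<dots> = infsum (\<lambda>g. ww E g * (if last g \<in> B then 1 else 0)) (HW A a)"
    by (rule infsum_restrict_ennreal)
  also have "\<dots> = infsum (\<lambda>t. PT E A t * (if last (fst t) \<in> B then 1 else 0)) (TR A a b)"
    by (rule M1[OF assms(1,2), symmetric])
  finally show ?thesis .
qed

lemma final:
  assumes x: "x \<in> V" and y: "y \<in> V" and nx: "nbrs E x \<noteq> {}" and ny: "nbrs E y \<noteq> {}"
  shows "\<bar>hit_law E A x B - hit_law E A y B\<bar> \<le> 1 - stopped_prob E A x (\<lambda>p. disconnects E (set p) y A)"
proof -
  let ?T = "TR A x y"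
  define ex where "ex t = (if last (fst t) \<in> B then 1 else 0 :: ennreal)" for t :: "'a list \<times> 'a list"
  define ey where "ey t = (if last (fst (swapT t)) \<in> B then 1 else 0 :: ennreal)" for t :: "'a list \<times> 'a list"
  define jj where "jj t = (if JJ t then 1 else 0 :: ennreal)" for t :: "'a list \<times> 'a list"
  define nj where "nj t = (if JJ t then 0 else 1 :: ennreal)" for t :: "'a list \<times> 'a list"
  have hx: "ennreal (hit_law E A x B) = infsum (\<lambda>t. PT E A t * ex t) ?T"
    unfolding ex_def by (rule hit_tree[OF x y nx])
  have "ennreal (hit_law E A y B) = infsum (\<lambda>t. PT E A t * (if last (fst t) \<in> B then 1 else 0)) (TR A y x)"
    by (rule hit_tree[OF y x ny])
  also have "\<dots> = infsum (\<lambda>t. PT E A (swapT t) * (if last (fst (swapT t)) \<in> B then 1 else 0)) ?T"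
    by (rule reindex_swap)
  also have "\<dots> = infsum (\<lambda>t. PT E A t * ey t) ?T"
    by (rule infsum_cong) (simp add: ey_def tree_swap)
  finally have hy: "ennreal (hit_law E A y B) = infsum (\<lambda>t. PT E A t * ey t) ?T" .
  have tot: "infsum (\<lambda>t. PT E A t) ?T = 1"
    using M1[OF x y, of "\<lambda>_. 1"] hitsW[OF x] by simp
  have "ennreal (stopped_prob E A x (\<lambda>p. disconnects E (set p) y A))
      = infsum (ww E) {g \<in> HW A x. disconnects E (set g) y A}"
    by (rule stopped_ww[OF x nx])
  also have "\<dots> \<le> infsum (\<lambda>s. PT E A s * (if JJ s then 1 else 0)) (TR A y x)"
    by (rule PD_le[OF x y])
  also have "\<dots> = infsum (\<lambda>t. PT E A (swapT t) * (if JJ (swapT t) then 1 else 0)) ?T"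
    by (rule reindex_swap)
  also have "\<dots> = infsum (\<lambda>t. PT E A t * jj t) ?T"
    by (rule infsum_cong) (simp add: jj_def tree_swap)
  finally have pd: "ennreal (stopped_prob E A x (\<lambda>p. disconnects E (set p) y A)) \<le> infsum (\<lambda>t. PT E A t * jj t) ?T" .
  have split: "infsum (\<lambda>t. PT E A t * jj t) ?T + infsum (\<lambda>t. PT E A t * nj t) ?T = 1"
  proof -
    have "infsum (\<lambda>t. PT E A t * jj t) ?T + infsum (\<lambda>t. PT E A t * nj t) ?T
        = infsum (\<lambda>t. PT E A t * jj t + PT E A t * nj t) ?T"
      by (rule infsum_add_ennreal[symmetric])
    also have "\<dots> = infsum (\<lambda>t. PT E A t) ?T"
      by (rule infsum_cong) (simp add: jj_def nj_def)
    finally show ?thesis using tot by simp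
  qed
  have le1: "infsum (\<lambda>t. PT E A t * ex t) ?T \<le> infsum (\<lambda>t. PT E A t * ey t) ?T + infsum (\<lambda>t. PT E A t * nj t) ?T"
  proof -
    have "infsum (\<lambda>t. PT E A t * ex t) ?T \<le> infsum (\<lambda>t. PT E A t * ey t + PT E A t * nj t) ?T"
    proof (rule infsum_mono_ennreal)
      fix t assume t: "t \<in> ?T"
      show "PT E A t * ex t \<le> PT E A t * ey t + PT E A t * nj t"
      proof (cases "JJ t")
        case True
        then have "ex t = ey t" using tree_swap[OF t] by (simp add: ex_def ey_def)
        then show ?thesis by simp
      next
        case False
        have "PT E A t * ex t \<le> PT E A t * nj t"
          using False by (simp add: ex_def nj_def)
        then show ?thesis by (meson add_increasing zero_le)
      qed
    qed
    then show ?thesis by (simp add: infsum_add_ennreal)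
  qed
  have le2: "infsum (\<lambda>t. PT E A t * ey t) ?T \<le> infsum (\<lambda>t. PT E A t * ex t) ?T + infsum (\<lambda>t. PT E A t * nj t) ?T"
  proof -
    have "infsum (\<lambda>t. PT E A t * ey t) ?T \<le> infsum (\<lambda>t. PT E A t * ex t + PT E A t * nj t) ?T"
    proof (rule infsum_mono_ennreal)
      fix t assume t: "t \<in> ?T"
      show "PT E A t * ey t \<le> PT E A t * ex t + PT E A t * nj t"
      proof (cases "JJ t")
        case True
        then have "ex t = ey t" using tree_swap[OF t] by (simp add: ex_def ey_def)
        then show ?thesis by simp
      next
        case False
        have "PT E A t * ey t \<le> PT E A t * nj t"
          using False by (simp add: ey_def nj_def)
        then show ?thesis by (meson add_increasing zero_le)
      qed
    qed
    then show ?thesis by (simp add: infsum_add_ennreal)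
  qed
  define ja where "ja = infsum (\<lambda>t. PT E A t * jj t) ?T"
  define nb where "nb = infsum (\<lambda>t. PT E A t * nj t) ?T"
  have ja1: "ja \<le> 1" and nb1: "nb \<le> 1" using split unfolding ja_def nb_def
    by (metis le_iff_add add.commute)+
  obtain rja where rja: "ja = ennreal rja" "rja \<ge> 0" using ja1
    by (metis ennreal_cases ennreal_one_less_top leD)
  obtain rnb where rnb: "nb = ennreal rnb" "rnb \<ge> 0" using nb1
    by (metis ennreal_cases ennreal_one_less_top leD)
  have sum1: "rja + rnb = 1"
    using split rja rnb unfolding ja_def[symmetric] nb_def[symmetric]
    by (metis ennreal_1 ennreal_inj ennreal_plus zero_le_one add_nonneg_nonneg)
  have hx0: "hit_law E A x B \<ge> 0" unfolding hit_law_def by (rule stopped_nonneg[OF x nx])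
  have hy0: "hit_law E A y B \<ge> 0" unfolding hit_law_def by (rule stopped_nonneg[OF y ny])
  have pd0: "stopped_prob E A x (\<lambda>p. disconnects E (set p) y A) \<ge> 0" by (rule stopped_nonneg[OF x nx])
  have i1: "hit_law E A x B \<le> hit_law E A y B + rnb"
  proof -
    have "ennreal (hit_law E A x B) \<le> ennreal (hit_law E A y B + rnb)"
      using le1 hx hy rnb hy0 unfolding nb_def[symmetric] by simp
    then show ?thesis using hy0 rnb(2) by (meson add_nonneg_nonneg ennreal_le_iff)
  qed
  have i2: "hit_law E A y B \<le> hit_law E A x B + rnb"
  proof -
    have "ennreal (hit_law E A y B) \<le> ennreal (hit_law E A x B + rnb)"
      using le2 hx hy rnb hx0 unfolding nb_def[symmetric] by simp
    then show ?thesis using hx0 rnb(2) by (meson add_nonneg_nonneg ennreal_le_iff)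
  qed
  have i3: "stopped_prob E A x (\<lambda>p. disconnects E (set p) y A) \<le> rja"
    using pd rja unfolding ja_def[symmetric] by (simp add: ennreal_le_iff)
  show ?thesis using i1 i2 i3 sum1 by linarith
qed

end


theorem lemma3p12:
  fixes V :: "'a set" and E :: "'a \<Rightarrow> 'a \<Rightarrow> bool" and A :: "'a set" and x y :: 'a
  assumes edges: "\<And>u v. E u v \<Longrightarrow> u \<in> V \<and> v \<in> V"
    and sym: "\<And>u v. E u v \<Longrightarrow> E v u"
    and irrefl: "\<And>v. \<not> E v v"
    and locfin: "\<And>v. v \<in> V \<Longrightarrow> finite (nbrs E v)"
    and conn: "\<And>u v. u \<in> V \<Longrightarrow> v \<in> V \<Longrightarrow> E\<^sup>*\<^sup>* u v"
    and AV: "A \<subseteq> V"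
    and hits: "\<And>v. v \<in> V \<Longrightarrow> stopped_prob E A v (\<lambda>_. True) = 1"
    and x: "x \<in> V - A" and y: "y \<in> V - A"
  shows "dTV_hit E A x y \<le> 1 - stopped_prob E A x (\<lambda>p. disconnects E (set p) y A)"
proof -
  interpret graph V E using edges sym locfin by unfold_locales
  have Ane: "A \<noteq> {}"
  proof
    assume A0: "A = {}"
    have "stopped_prob E A x (\<lambda>_. True) = 0"
      unfolding stopped_prob_def using A0 by (simp add: first_hit_def)
    then show False using hits[of x] x by simp
  qed
  then obtain a where aA: "a \<in> A" by blast
  have nb: "nbrs E v \<noteq> {}" if v: "v \<in> V" for v
  proof -
    obtain w where w: "w \<in> V" "w \<noteq> v"
    proof (cases "v = a")
      case True
      then show ?thesis using that x aA by auto
    next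
      case False
      then show ?thesis using that aA AV by auto
    qed
    have "E\<^sup>*\<^sup>* v w" using conn v w(1) by blast
    then obtain u where "E v u" using w(2) by (metis converse_rtranclpE)
    then show ?thesis by (auto simp: nbrs_def)
  qed
  have hitsW: "infsum (ww E) (HW A v) = 1" if v: "v \<in> V" for v
  proof -
    have "ennreal (stopped_prob E A v (\<lambda>_. True)) = infsum (ww E) {p \<in> HW A v. True}"
      by (rule stopped_ww[OF v nb[OF v]])
    then show ?thesis using hits[OF v] by simp
  qed
  interpret rwA V E A using AV hitsW by unfold_locales auto
  have xV: "x \<in> V" and yV: "y \<in> V" using x y by auto
  show ?thesis
    unfolding dTV_hit_def
    by (rule cSUP_least) (auto intro: final[OF xV yV nb[OF xV] nb[OF yV]])
qed


end
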